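(* For every $n\geq 1$, $T_n(x,y)=T_{2,n}(x,y)+3T_{1,n}(x,y)+T_{0,n}(x,y)$, where $T_{2,n},T_{1,n},T_{0,n}\in\mathbb{Z}[x,y]$ satisfy the initial conditions $T_{2,1}=y+2$, $T_{1,1}=x-1$, $T_{0,1}=(x-1)^2$ and, for all $n\geq1$, the following identities (in $\mathbb{Q}(x,y)$), where $T_{i}$ abbreviates $T_{i,n}(x,y)$: $$T_{2,n+1}=(y-1)T_{2}^3+\frac{1}{x-1}\left(6T_{2}^2T_{1}+3T_{2}T_{1}^2\right),$$ $$T_{1,n+1}=(y-1)T_{2}^2T_{1}+\frac{1}{x-1}\left(T_{2}^2T_{0}+7T_{2}T_{1}^2+2T_{2}T_{1}T_{0}+4T_{1}^3+T_{1}^2T_{0}\right),$$ $$T_{0,n+1}=(y-1)\left(3T_{2}T_{1}^2+T_{1}^3\right)+\frac{1}{x-1}\left(12T_{2}T_{1}T_{0}+3T_{2}T_{0}^2+14T_{1}^3+24T_{1}^2T_{0}+9T_{1}T_{0}^2+T_{0}^3\right).$$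
   Context: Graphs are finite; multiple edges are allowed. For a graph $G$, a spanning subgraph $A$ has vertex set $V(G)$ and edge set $E(A)\subseteq E(G)$; $k(A)$ is its number of connected components, $r(A)=|V(G)|-k(A)$, $n(A)=|E(A)|-r(A)$. The Tutte polynomial is $T(G;x,y)=\sum_{A}(x-1)^{r(G)-r(A)}(y-1)^{n(A)}$, the sum over all spanning subgraphs $A$; call the summand the weight of $A$. Sierpiński graphs $\Gamma_n$ ($n\ge1$), each with three distinguished outmost vertices called top, left, right: $\Gamma_1$ is the triangle $K_3$ with its three vertices as top, left, right. $\Gamma_{n+1}$ is obtained from three disjoint copies $G_1,G_2,G_3$ of $\Gamma_n$ by identifying left$(G_1)$ with top$(G_2)$, right$(G_1)$ with top$(G_3)$, and right$(G_2)$ with left$(G_3)$; its outmost vertices are top$(G_1)$ (top), left$(G_2)$ (left), right$(G_3)$ (right). Then $|V(\Gamma_n)|=(3^n+3)/2$, $|E(\Gamma_n)|=3^n$. Write $T_n(x,y)=T(\Gamma_n;x,y)$. Define $T_{2,n}(x,y)$ as the sum of the weights (with respect to $G=\Gamma_n$) of the spanning subgraphs of $\Gamma_n$ in which the three outmost vertices lie in one component; $T_{1,n}(x,y)$ as the sum over spanning subgraphs in which the left and right outmost vertices lie in the same component and the top one lies in a different component; $T_{0,n}(x,y)$ as the sum over spanning subgraphs in which the three outmost vertices lie in three distinct components. *)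

theory Defs
  imports Complex_Main
begin

text \<open>Vertices are natural numbers; edges are given as a list of (unordered) endpoint pairs,
  so that parallel edges are distinct list positions.\<close>

record sgraph =
  verts :: "nat set"
  edges :: "(nat \<times> nat) list"
  topv :: nat
  lftv :: nat
  rgtv :: nat

definition triangle :: sgraph where
  "triangle = \<lparr> verts = {0,1,2}, edges = [(0,1),(0,2),(1,2)],
                 topv = 0, lftv = 1, rgtv = 2 \<rparr>"

text \<open>Gluing three disjoint copies G1,G2,G3 of G: copy i is embedded by f_i;
  left(G1)=top(G2), right(G1)=top(G3), right(G2)=left(G3).\<close>

definition glue :: "sgraph \<Rightarrow> sgraph" where
  "glue G = (let N = Suc (Max (verts G));
      f1 = (\<lambda>v. v);
      f2 = (\<lambda>v. if v = topv G then lftv G else N + v);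
      f3 = (\<lambda>v. if v = topv G then rgtv G else if v = lftv G then N + rgtv G else 2 * N + v)
   in \<lparr> verts = f1 ` verts G \<union> f2 ` verts G \<union> f3 ` verts G,
        edges = map (map_prod f1 f1) (edges G) @ map (map_prod f2 f2) (edges G)
                @ map (map_prod f3 f3) (edges G),
        topv = f1 (topv G), lftv = f2 (lftv G), rgtv = f3 (rgtv G) \<rparr>)"

text \<open>Sierpinski graph Gamma_n, for n \<ge> 1 (Gamma 0 is set to the triangle as well, unused).\<close>
fun Gamma :: "nat \<Rightarrow> sgraph" where
  "Gamma 0 = triangle"
| "Gamma (Suc 0) = triangle"
| "Gamma (Suc (Suc n)) = glue (Gamma (Suc n))"

text \<open>Spanning subgraphs are given by sets A of edge indices.\<close>
definition spanning :: "sgraph \<Rightarrow> nat set set" where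
  "spanning G = Pow {..<length (edges G)}"

definition adj :: "sgraph \<Rightarrow> nat set \<Rightarrow> (nat \<times> nat) set" where
  "adj G A = {(u, v). \<exists>i\<in>A. i < length (edges G) \<and>
                       (edges G ! i = (u, v) \<or> edges G ! i = (v, u))}"

definition conn :: "sgraph \<Rightarrow> nat set \<Rightarrow> nat \<Rightarrow> nat \<Rightarrow> bool" where
  "conn G A u v \<longleftrightarrow> (u, v) \<in> (adj G A)\<^sup>*"

definition ncomp :: "sgraph \<Rightarrow> nat set \<Rightarrow> nat" where
  "ncomp G A = card (verts G // {(u, v). u \<in> verts G \<and> v \<in> verts G \<and> conn G A u v})"

definition rk :: "sgraph \<Rightarrow> nat set \<Rightarrow> nat" where
  "rk G A = card (verts G) - ncomp G A"

definition nul :: "sgraph \<Rightarrow> nat set \<Rightarrow> nat" where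
  "nul G A = card A - rk G A"

text \<open>Weight (x-1)^(r(G)-r(A)) (y-1)^(n(A)); both exponents are nonnegative integers.\<close>
definition weight :: "sgraph \<Rightarrow> nat set \<Rightarrow> real \<Rightarrow> real \<Rightarrow> real" where
  "weight G A x y = (x - 1) ^ (rk G {..<length (edges G)} - rk G A) * (y - 1) ^ nul G A"

definition tutte :: "sgraph \<Rightarrow> real \<Rightarrow> real \<Rightarrow> real" where
  "tutte G x y = (\<Sum>A\<in>spanning G. weight G A x y)"

definition Tn :: "nat \<Rightarrow> real \<Rightarrow> real \<Rightarrow> real" where
  "Tn n x y = tutte (Gamma n) x y"

definition T2 :: "nat \<Rightarrow> real \<Rightarrow> real \<Rightarrow> real" where
  "T2 n x y = (let G = Gamma n in
     \<Sum>A\<in>{A\<in>spanning G. conn G A (topv G) (lftv G) \<and> conn G A (lftv G) (rgtv G)}.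
       weight G A x y)"

definition T1 :: "nat \<Rightarrow> real \<Rightarrow> real \<Rightarrow> real" where
  "T1 n x y = (let G = Gamma n in
     \<Sum>A\<in>{A\<in>spanning G. conn G A (lftv G) (rgtv G) \<and> \<not> conn G A (topv G) (lftv G)}.
       weight G A x y)"

definition T0 :: "nat \<Rightarrow> real \<Rightarrow> real \<Rightarrow> real" where
  "T0 n x y = (let G = Gamma n in
     \<Sum>A\<in>{A\<in>spanning G. \<not> conn G A (topv G) (lftv G) \<and> \<not> conn G A (lftv G) (rgtv G)
                          \<and> \<not> conn G A (topv G) (rgtv G)}.
       weight G A x y)"

end

theory Submission
  imports Defs
begin


lemma rtrancl_map_inj:
  assumes "(a,b) \<in> R\<^sup>*"
  shows "(f a, f b) \<in> (map_prod f f ` R)\<^sup>*"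
  using assms
proof induct
  case base then show ?case by simp
next
  case (step y z)
  then have "(f y, f z) \<in> map_prod f f ` R" by force
  with step show ?case by (meson rtrancl_into_rtrancl)
qed

lemma rtrancl_map_inj_rev:
  assumes inj: "inj f" and h: "(u,v) \<in> (map_prod f f ` R)\<^sup>*"
  shows "\<And>a b. u = f a \<Longrightarrow> v = f b \<Longrightarrow> (a,b) \<in> R\<^sup>*"
  using h
proof induct
  case base then show ?case using inj by (simp add: inj_eq)
next
  case (step w z)
  from step(2) obtain c d where cd: "(c,d) \<in> R" "w = f c" "z = f d" by auto
  have "(a,c) \<in> R\<^sup>*" using step(3)[OF step(4) cd(2)] .
  moreover have "d = b" using cd(3) step(5) inj by (simp add: inj_eq)
  ultimately show ?case using cd(1) by (meson rtrancl_into_rtrancl)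
qed

lemma rtrancl_map_inj_iff:
  assumes "inj f"
  shows "(f a, f b) \<in> (map_prod f f ` R)\<^sup>* \<longleftrightarrow> (a,b) \<in> R\<^sup>*"
  using rtrancl_map_inj rtrancl_map_inj_rev[OF assms] by metis

lemma rtrancl_stays:
  assumes "(v,w) \<in> Q\<^sup>*" "Q \<subseteq> W \<times> W" "v \<in> W"
  shows "w \<in> W"
  using assms by induct auto

definition clsR :: "'a set \<Rightarrow> ('a \<times> 'a) set \<Rightarrow> 'a \<Rightarrow> 'a set" where
  "clsR X R u = {v\<in>X. (u,v) \<in> R\<^sup>*}"

locale pieces =
  fixes I :: "'i set" and W :: "'i \<Rightarrow> 'a set" and Q :: "'i \<Rightarrow> ('a \<times> 'a) set"
    and P :: "'a set"
  assumes sub: "\<And>i. i\<in>I \<Longrightarrow> Q i \<subseteq> W i \<times> W i"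
    and ov: "\<And>i j. i\<in>I \<Longrightarrow> j\<in>I \<Longrightarrow> i\<noteq>j \<Longrightarrow> W i \<inter> W j \<subseteq> P"
begin

definition "RR = (\<Union>i\<in>I. Q i)"
definition "XX = (\<Union>i\<in>I. W i)"

lemma piece_path:
  assumes "(v,w) \<in> RR\<^sup>*" "i\<in>I" "v \<in> W i"
  shows "(v,w) \<in> (Q i)\<^sup>* \<or> (\<exists>p\<in>P. (v,p)\<in>(Q i)\<^sup>* \<and> (p,w)\<in>RR\<^sup>*)"
  using assms(1)
proof induct
  case base then show ?case by simp
next
  case (step w z)
  from step(3) show ?case
  proof
    assume a: "(v, w) \<in> (Q i)\<^sup>*"
    have wW: "w \<in> W i" using rtrancl_stays[OF a sub[OF assms(2)] assms(3)] .
    from step(2) obtain j where j: "j \<in> I" "(w,z) \<in> Q j" unfolding RR_def by auto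
    show ?thesis
    proof (cases "j = i")
      case True then show ?thesis using a j by (meson rtrancl_into_rtrancl)
    next
      case False
      have "w \<in> W j" using sub[OF j(1)] j(2) by auto
      then have "w \<in> P" using ov[OF assms(2) j(1)] False wW by auto
      moreover have "(w,z) \<in> RR\<^sup>*" using step(2) by auto
      ultimately show ?thesis using a by blast
    qed
  next
    assume "\<exists>p\<in>P. (v, p) \<in> (Q i)\<^sup>* \<and> (p, w) \<in> RR\<^sup>*"
    then show ?thesis using step(2) by (meson rtrancl.rtrancl_into_rtrancl)
  qed
qed

lemma port_closed:
  assumes PX: "P \<subseteq> XX"
    and E: "\<And>i p q. i\<in>I \<Longrightarrow> p\<in>P \<Longrightarrow> q\<in>P \<Longrightarrow> p \<in> W i \<Longrightarrow> (p,q)\<in>(Q i)\<^sup>* \<Longrightarrow> (p,q)\<in>E"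
    and tE: "trans E"
    and pq: "(p,q) \<in> RR\<^sup>*" "p\<in>P" "q\<in>P"
  shows "(p,q) \<in> E"
proof -
  have gen: "\<exists>r\<in>P. \<exists>i\<in>I. (p,r)\<in>E \<and> r \<in> W i \<and> (r,w) \<in> (Q i)\<^sup>*" if "(p,w) \<in> RR\<^sup>*" for w
    using that
  proof induct
    case base
    from pq(2) PX obtain i where "i \<in> I" "p \<in> W i" unfolding XX_def by auto
    then show ?case using E[of i p p] pq(2) by auto
  next
    case (step w z)
    from step(3) obtain r i where ri: "r\<in>P" "i\<in>I" "(p,r)\<in>E" "r \<in> W i" "(r,w) \<in> (Q i)\<^sup>*" by blast
    have wW: "w \<in> W i" using rtrancl_stays[OF ri(5) sub[OF ri(2)] ri(4)] .
    from step(2) obtain j where j: "j \<in> I" "(w,z) \<in> Q j" unfolding RR_def by auto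
    show ?case
    proof (cases "j = i")
      case True then show ?thesis using ri j by (meson rtrancl_into_rtrancl)
    next
      case False
      have wj: "w \<in> W j" using sub[OF j(1)] j(2) by auto
      then have wP: "w \<in> P" using ov[OF ri(2) j(1)] False wW by auto
      have "(r,w) \<in> E" using E[OF ri(2) ri(1) wP ri(4) ri(5)] .
      then have "(p,w) \<in> E" using ri(3) tE by (meson transD)
      then show ?thesis using wP j wj by blast
    qed
  qed
  from gen[OF pq(1)] obtain r i where ri: "r\<in>P" "i\<in>I" "(p,r)\<in>E" "r \<in> W i" "(r,q) \<in> (Q i)\<^sup>*" by blast
  have "(r,q) \<in> E" using E[OF ri(2) ri(1) pq(3) ri(4) ri(5)] .
  then show ?thesis using ri(3) tE by (meson transD)
qed

lemma RR_sub: "RR \<subseteq> XX \<times> XX"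
  unfolding RR_def XX_def using sub by blast

lemma cls_piece_eq:
  assumes i: "i \<in> I" and u: "u \<in> W i" and np: "clsR (W i) (Q i) u \<inter> P = {}"
  shows "clsR XX RR u = clsR (W i) (Q i) u"
proof
  show "clsR (W i) (Q i) u \<subseteq> clsR XX RR u"
  proof
    fix v assume "v \<in> clsR (W i) (Q i) u"
    then have v: "v \<in> W i" "(u,v) \<in> (Q i)\<^sup>*" unfolding clsR_def by auto
    have "Q i \<subseteq> RR" unfolding RR_def using i by auto
    then have "(u,v) \<in> RR\<^sup>*" using v(2) rtrancl_mono by blast
    then show "v \<in> clsR XX RR u" using v(1) i unfolding clsR_def XX_def by auto
  qed
next
  show "clsR XX RR u \<subseteq> clsR (W i) (Q i) u"
  proof
    fix v assume "v \<in> clsR XX RR u"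
    then have v: "(u,v) \<in> RR\<^sup>*" unfolding clsR_def by auto
    from piece_path[OF v i u] show "v \<in> clsR (W i) (Q i) u"
    proof
      assume "(u,v) \<in> (Q i)\<^sup>*"
      then show ?thesis using rtrancl_stays[OF _ sub[OF i] u] unfolding clsR_def by auto
    next
      assume "\<exists>p\<in>P. (u, p) \<in> (Q i)\<^sup>* \<and> (p, v) \<in> RR\<^sup>*"
      then obtain p where "p \<in> P" "(u,p) \<in> (Q i)\<^sup>*" by blast
      then have "p \<in> clsR (W i) (Q i) u \<inter> P"
        using rtrancl_stays[OF _ sub[OF i] u] unfolding clsR_def by auto
      with np show ?thesis by blast
    qed
  qed
qed

lemma np_decomp:
  "{C \<in> clsR XX RR ` XX. C \<inter> P = {}} = (\<Union>i\<in>I. {C \<in> clsR (W i) (Q i) ` W i. C \<inter> P = {}})"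
proof
  show "{C \<in> clsR XX RR ` XX. C \<inter> P = {}} \<subseteq> (\<Union>i\<in>I. {C \<in> clsR (W i) (Q i) ` W i. C \<inter> P = {}})"
  proof
    fix C assume C: "C \<in> {C \<in> clsR XX RR ` XX. C \<inter> P = {}}"
    then obtain u where u: "u \<in> XX" "C = clsR XX RR u" "C \<inter> P = {}" by auto
    then obtain i where i: "i \<in> I" "u \<in> W i" unfolding XX_def by auto
    have sub1: "clsR (W i) (Q i) u \<subseteq> clsR XX RR u"
    proof
      fix v assume "v \<in> clsR (W i) (Q i) u"
      then have v: "v \<in> W i" "(u,v) \<in> (Q i)\<^sup>*" unfolding clsR_def by auto
      have "Q i \<subseteq> RR" unfolding RR_def using i by auto
      then have "(u,v) \<in> RR\<^sup>*" using v(2) rtrancl_mono by blast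
      then show "v \<in> clsR XX RR u" using v(1) i unfolding clsR_def XX_def by auto
    qed
    then have "clsR (W i) (Q i) u \<inter> P = {}" using u by auto
    then have "C = clsR (W i) (Q i) u" using cls_piece_eq[OF i] u by auto
    then show "C \<in> (\<Union>i\<in>I. {C \<in> clsR (W i) (Q i) ` W i. C \<inter> P = {}})" using i u by auto
  qed
next
  show "(\<Union>i\<in>I. {C \<in> clsR (W i) (Q i) ` W i. C \<inter> P = {}}) \<subseteq> {C \<in> clsR XX RR ` XX. C \<inter> P = {}}"
  proof
    fix C assume "C \<in> (\<Union>i\<in>I. {C \<in> clsR (W i) (Q i) ` W i. C \<inter> P = {}})"
    then obtain i u where iu: "i \<in> I" "u \<in> W i" "C = clsR (W i) (Q i) u" "C \<inter> P = {}" by auto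
    then have "C = clsR XX RR u" using cls_piece_eq[OF iu(1,2)] by auto
    moreover have "u \<in> XX" using iu unfolding XX_def by auto
    ultimately show "C \<in> {C \<in> clsR XX RR ` XX. C \<inter> P = {}}" using iu by auto
  qed
qed

lemma np_card:
  assumes fI: "finite I" and fW: "\<And>i. i \<in> I \<Longrightarrow> finite (W i)"
  shows "card {C \<in> clsR XX RR ` XX. C \<inter> P = {}} = (\<Sum>i\<in>I. card {C \<in> clsR (W i) (Q i) ` W i. C \<inter> P = {}})"
  unfolding np_decomp
proof (rule card_UN_disjoint[OF fI])
  show "\<forall>i\<in>I. finite {C \<in> clsR (W i) (Q i) ` W i. C \<inter> P = {}}" using fW by auto
  show "\<forall>i\<in>I. \<forall>j\<in>I. i \<noteq> j \<longrightarrow> {C \<in> clsR (W i) (Q i) ` W i. C \<inter> P = {}} \<inter> {C \<in> clsR (W j) (Q j) ` W j. C \<inter> P = {}} = {}"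
  proof (intro ballI impI)
    fix i j assume ij: "i \<in> I" "j \<in> I" "i \<noteq> j"
    show "{C \<in> clsR (W i) (Q i) ` W i. C \<inter> P = {}} \<inter> {C \<in> clsR (W j) (Q j) ` W j. C \<inter> P = {}} = {}"
    proof (rule ccontr)
      assume "\<not> ?thesis"
      then obtain C u v where C: "u \<in> W i" "C = clsR (W i) (Q i) u" "v \<in> W j" "C = clsR (W j) (Q j) v" "C \<inter> P = {}"
        by blast
      have "u \<in> C" using C unfolding clsR_def by auto
      then have "u \<in> W j" using C(4) unfolding clsR_def by auto
      then have "u \<in> P" using ov[OF ij] C(1) by auto
      then show False using \<open>u \<in> C\<close> C(5) by auto
    qed
  qed
qed

end

lemma cls_split:
  assumes fX: "finite X" and RX: "R \<subseteq> X \<times> X" and sR: "sym R" and PX: "P \<subseteq> X"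
  shows "card (clsR X R ` X) = card {C \<in> clsR X R ` X. C \<inter> P = {}} + card (clsR X R ` P)"
proof -
  have symS: "(v,u) \<in> R\<^sup>*" if "(u,v) \<in> R\<^sup>*" for u v
    using that sR by (meson sym_rtrancl symD)
  have eq: "clsR X R u = clsR X R v" if "(u,v) \<in> R\<^sup>*" for u v
    using that symS unfolding clsR_def by (auto intro: rtrancl_trans)
  have "clsR X R ` X = {C \<in> clsR X R ` X. C \<inter> P = {}} \<union> clsR X R ` P"
  proof -
    have "clsR X R ` P \<subseteq> clsR X R ` X" using PX by auto
    moreover have "C \<in> clsR X R ` P" if "C \<in> clsR X R ` X" "C \<inter> P \<noteq> {}" for C
    proof -
      from that obtain u p where "C = clsR X R u" "p \<in> C" "p \<in> P" by auto
      then have "(u,p) \<in> R\<^sup>*" unfolding clsR_def by auto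
      then show ?thesis using eq \<open>C = _\<close> \<open>p\<in>P\<close> by auto
    qed
    ultimately show ?thesis by blast
  qed
  moreover have "{C \<in> clsR X R ` X. C \<inter> P = {}} \<inter> clsR X R ` P = {}"
  proof -
    have "p \<in> clsR X R p" if "p \<in> P" for p using that PX unfolding clsR_def by auto
    then show ?thesis by auto
  qed
  moreover have "finite (clsR X R ` X)" using fX by simp
  ultimately show ?thesis using PX card_Un_disjoint[of "{C \<in> clsR X R ` X. C \<inter> P = {}}" "clsR X R ` P"]
    by (metis (no_types, lifting) finite_Un)
qed

fun cnt :: "('a \<Rightarrow> 'a \<Rightarrow> bool) \<Rightarrow> 'a list \<Rightarrow> nat" where
  "cnt r [] = 0"
| "cnt r (x # xs) = cnt r xs + (if (\<exists>y\<in>set xs. r x y) then 0 else 1)"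

lemma card_image_cnt:
  assumes "\<And>p q. p \<in> set xs \<Longrightarrow> q \<in> set xs \<Longrightarrow> f p = f q \<longleftrightarrow> r p q"
  shows "card (f ` set xs) = cnt r xs"
  using assms
proof (induct xs)
  case Nil then show ?case by simp
next
  case (Cons x xs)
  have ih: "card (f ` set xs) = cnt r xs" using Cons by auto
  have "f x \<in> f ` set xs \<longleftrightarrow> (\<exists>y\<in>set xs. r x y)" using Cons(2) by auto
  then show ?case using ih by (auto simp: card_insert_if)
qed


definition good :: "sgraph \<Rightarrow> bool" where
  "good G \<longleftrightarrow> finite (verts G) \<and> topv G \<in> verts G \<and> lftv G \<in> verts G \<and> rgtv G \<in> verts G
     \<and> topv G \<noteq> lftv G \<and> topv G \<noteq> rgtv G \<and> lftv G \<noteq> rgtv G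
     \<and> (\<forall>e\<in>set (edges G). fst e \<in> verts G \<and> snd e \<in> verts G)"

definition gN :: "sgraph \<Rightarrow> nat" where "gN G = Suc (Max (verts G))"

definition gf :: "sgraph \<Rightarrow> nat \<Rightarrow> nat \<Rightarrow> nat" where
  "gf G i v = (if i = 0 then v
     else if i = 1 then (if v = topv G then lftv G else gN G + v)
     else (if v = topv G then rgtv G else if v = lftv G then gN G + rgtv G else 2 * gN G + v))"

lemma glue_simps:
  "verts (glue G) = gf G 0 ` verts G \<union> gf G 1 ` verts G \<union> gf G 2 ` verts G"
  "edges (glue G) = map (map_prod (gf G 0) (gf G 0)) (edges G) @ map (map_prod (gf G 1) (gf G 1)) (edges G)
                @ map (map_prod (gf G 2) (gf G 2)) (edges G)"
  "topv (glue G) = topv G"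
  "topv G \<noteq> lftv G \<Longrightarrow> lftv (glue G) = gN G + lftv G"
  "topv G \<noteq> rgtv G \<Longrightarrow> lftv G \<noteq> rgtv G \<Longrightarrow> rgtv (glue G) = 2 * gN G + rgtv G"
proof -
  have e0: "gf G 0 = (\<lambda>v. v)" by (auto simp: gf_def)
  have e1: "gf G 1 = (\<lambda>v. if v = topv G then lftv G else Suc (Max (verts G)) + v)"
    by (auto simp: gf_def gN_def fun_eq_iff)
  have e2: "gf G 2 = (\<lambda>v. if v = topv G then rgtv G else if v = lftv G then Suc (Max (verts G)) + rgtv G else 2 * Suc (Max (verts G)) + v)"
    by (auto simp: gf_def gN_def fun_eq_iff)
  have "map_prod (\<lambda>v::nat. v) (\<lambda>v. v) = id" by (auto simp: map_prod_def)
  then show "verts (glue G) = gf G 0 ` verts G \<union> gf G 1 ` verts G \<union> gf G 2 ` verts G"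
    "edges (glue G) = map (map_prod (gf G 0) (gf G 0)) (edges G) @ map (map_prod (gf G 1) (gf G 1)) (edges G)
                @ map (map_prod (gf G 2) (gf G 2)) (edges G)"
    "topv (glue G) = topv G"
    unfolding glue_def Let_def e0 e1 e2 by simp_all
  show "topv G \<noteq> lftv G \<Longrightarrow> lftv (glue G) = gN G + lftv G"
    "topv G \<noteq> rgtv G \<Longrightarrow> lftv G \<noteq> rgtv G \<Longrightarrow> rgtv (glue G) = 2 * gN G + rgtv G"
    unfolding glue_def Let_def by (simp_all add: gN_def)
qed

lemma vert_lt: "good G \<Longrightarrow> v \<in> verts G \<Longrightarrow> v < gN G"
  unfolding good_def gN_def by (simp add: le_imp_less_Suc)

lemma gf_inj: assumes g: "good G" and i: "i < 3" shows "inj (gf G i)"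
proof -
  have t: "topv G < gN G" "lftv G < gN G" "rgtv G < gN G" using vert_lt[OF g] g unfolding good_def by auto
  have d: "topv G \<noteq> lftv G" "topv G \<noteq> rgtv G" "lftv G \<noteq> rgtv G" using g unfolding good_def by auto
  show ?thesis
  proof (rule injI)
    fix u v assume "gf G i u = gf G i v"
    then show "u = v" using i t d unfolding gf_def
      by (auto split: if_splits simp: less_Suc_eq numeral_3_eq_3)
  qed
qed

datatype port = PT | PA | PB | PC | PL | PR
datatype cp = Ct | Cl | Cr

fun pv :: "sgraph \<Rightarrow> port \<Rightarrow> nat" where
  "pv G PT = topv G" | "pv G PA = lftv G" | "pv G PB = rgtv G"
| "pv G PC = gN G + rgtv G" | "pv G PL = gN G + lftv G" | "pv G PR = 2 * gN G + rgtv G"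

fun cpv :: "sgraph \<Rightarrow> cp \<Rightarrow> nat" where
  "cpv G Ct = topv G" | "cpv G Cl = lftv G" | "cpv G Cr = rgtv G"

fun emb :: "nat \<Rightarrow> cp \<Rightarrow> port" where
  "emb i c = (if i = 0 then (case c of Ct \<Rightarrow> PT | Cl \<Rightarrow> PA | Cr \<Rightarrow> PB)
     else if i = 1 then (case c of Ct \<Rightarrow> PA | Cl \<Rightarrow> PL | Cr \<Rightarrow> PC)
     else (case c of Ct \<Rightarrow> PB | Cl \<Rightarrow> PC | Cr \<Rightarrow> PR))"

lemma gf_cpv: assumes g: "good G" shows "gf G i (cpv G c) = pv G (emb i c)"
  using g unfolding good_def by (cases c) (auto simp: gf_def)

lemma pv_inj: assumes g: "good G" shows "inj (pv G)"
proof -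
  have t: "topv G < gN G" "lftv G < gN G" "rgtv G < gN G" using vert_lt[OF g] g unfolding good_def by auto
  have d: "topv G \<noteq> lftv G" "topv G \<noteq> rgtv G" "lftv G \<noteq> rgtv G" using g unfolding good_def by auto
  show ?thesis
  proof (rule injI)
    fix p q assume "pv G p = pv G q"
    then show "p = q" using t d by (cases p; cases q; auto)
  qed
qed

lemma cpv_inj: assumes g: "good G" shows "inj (cpv G)"
proof (rule injI)
  fix p q assume "cpv G p = cpv G q"
  then show "p = q" using g unfolding good_def by (cases p; cases q; auto)
qed

lemma gf_port_iff:
  assumes g: "good G" and i: "i < 3" and v: "v \<in> verts G"
  shows "gf G i v \<in> range (pv G) \<longleftrightarrow> v \<in> range (cpv G)"
proof
  assume "v \<in> range (cpv G)" then show "gf G i v \<in> range (pv G)" using gf_cpv[OF g] by auto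
next
  have t: "topv G < gN G" "lftv G < gN G" "rgtv G < gN G" "v < gN G" using vert_lt[OF g] g v unfolding good_def by auto
  have d: "topv G \<noteq> lftv G" "topv G \<noteq> rgtv G" "lftv G \<noteq> rgtv G" using g unfolding good_def by auto
  assume "gf G i v \<in> range (pv G)"
  then obtain p where p: "gf G i v = pv G p" by auto
  have "v = topv G \<or> v = lftv G \<or> v = rgtv G"
    using p i t d unfolding gf_def
    by (cases p) (auto split: if_splits simp: less_Suc_eq numeral_3_eq_3)
  then show "v \<in> range (cpv G)" by (metis cpv.simps rangeI)
qed

lemma overlap:
  assumes g: "good G" and ij: "i < 3" "j < 3" "i \<noteq> j"
  shows "gf G i ` verts G \<inter> gf G j ` verts G \<subseteq> range (pv G)"
proof
  have d: "topv G \<noteq> lftv G" "topv G \<noteq> rgtv G" "lftv G \<noteq> rgtv G" using g unfolding good_def by auto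
  fix w assume "w \<in> gf G i ` verts G \<inter> gf G j ` verts G"
  then obtain u v where uv: "u \<in> verts G" "v \<in> verts G" "w = gf G i u" "w = gf G j v" by auto
  have t: "topv G < gN G" "lftv G < gN G" "rgtv G < gN G" "v < gN G" "u < gN G"
    using vert_lt[OF g] g uv unfolding good_def by auto
  have "u = topv G \<or> u = lftv G \<or> u = rgtv G"
    using uv ij t d unfolding gf_def
    by (auto split: if_splits simp: less_Suc_eq numeral_3_eq_3)
  then have "u \<in> range (cpv G)" by (metis cpv.simps rangeI)
  then show "w \<in> range (pv G)" using gf_port_iff[OF g ij(1) uv(1)] uv by auto
qed

lemma good_glue: assumes g: "good G" shows "good (glue G)"
proof -
  have d: "topv G \<noteq> lftv G" "topv G \<noteq> rgtv G" "lftv G \<noteq> rgtv G" using g unfolding good_def by auto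
  have t: "topv G < gN G" "lftv G < gN G" "rgtv G < gN G" using vert_lt[OF g] g unfolding good_def by auto
  have e: "\<forall>e\<in>set (edges G). fst e \<in> verts G \<and> snd e \<in> verts G" using g unfolding good_def by auto
  have "topv G \<in> verts G" "lftv G \<in> verts G" "rgtv G \<in> verts G" using g unfolding good_def by auto
  moreover have "gf G 1 (lftv G) = gN G + lftv G" "gf G 2 (rgtv G) = 2 * gN G + rgtv G"
    "gf G 0 (topv G) = topv G" using d by (auto simp: gf_def)
  ultimately have mem: "topv G \<in> verts (glue G)" "gN G + lftv G \<in> verts (glue G)"
     "2 * gN G + rgtv G \<in> verts (glue G)"
    unfolding glue_simps by (metis UnI1 UnI2 image_eqI)+
  show ?thesis unfolding good_def
    using g mem d t e unfolding glue_simps(1,2,3) glue_simps(4)[OF d(1)] glue_simps(5)[OF d(2,3)] good_def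
    by auto
qed

definition part :: "sgraph \<Rightarrow> nat set \<Rightarrow> nat \<Rightarrow> nat set" where
  "part G A i = {j. j < length (edges G) \<and> j + i * length (edges G) \<in> A}"

lemma nth3:
  assumes "j < length E" "i < 3"
  shows "(map g0 E @ map g1 E @ map g2 E) ! (j + i * length E) = (if i = 0 then g0 else if i = 1 then g1 else g2) (E ! j)"
  using assms by (auto simp: nth_append less_Suc_eq numeral_3_eq_3)

lemma adj_glue:
  "adj (glue G) A = (\<Union>i\<in>{0,1,2}. map_prod (gf G i) (gf G i) ` adj G (part G A i))"
proof -
  let ?m = "length (edges G)"
  let ?E = "edges G"
  have len: "length (edges (glue G)) = 3 * ?m" by (simp add: glue_simps)
  have nth: "edges (glue G) ! (j + i * ?m) = map_prod (gf G i) (gf G i) (?E ! j)" if "j < ?m" "i < 3" for i j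
  proof -
    have "i = 0 \<or> i = 1 \<or> i = 2" using that by auto
    then show ?thesis unfolding glue_simps using nth3[OF that] that by auto
  qed
  have dec: "\<exists>i j. i < 3 \<and> j < ?m \<and> k = j + i * ?m" if "k < 3 * ?m" for k
  proof -
    have "?m > 0" using that by auto
    then show ?thesis using that
      by (intro exI[of _ "k div ?m"] exI[of _ "k mod ?m"])
         (auto simp: less_mult_imp_div_less mult.commute)
  qed
  show ?thesis
  proof (rule set_eqI, rule iffI)
    fix uv assume "uv \<in> adj (glue G) A"
    then obtain u v where uv: "uv = (u,v)" and "\<exists>k\<in>A. k < 3 * ?m \<and> (edges (glue G) ! k = (u, v) \<or> edges (glue G) ! k = (v, u))"
      unfolding adj_def len by auto
    then obtain k where k: "k \<in> A" "k < 3 * ?m" "edges (glue G) ! k = (u, v) \<or> edges (glue G) ! k = (v, u)" by auto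
    from dec[OF k(2)] obtain i j where ij: "i < 3" "j < ?m" "k = j + i * ?m" by auto
    have jp: "j \<in> part G A i" using k ij unfolding part_def by auto
    obtain a b where ab: "?E ! j = (a,b)" by fastforce
    have "(u = gf G i a \<and> v = gf G i b) \<or> (v = gf G i a \<and> u = gf G i b)"
      using k(3) nth[OF ij(2,1)] ij(3) ab by auto
    then have "(u,v) \<in> map_prod (gf G i) (gf G i) ` adj G (part G A i)"
    proof
      assume h: "u = gf G i a \<and> v = gf G i b"
      have "(a,b) \<in> adj G (part G A i)" unfolding adj_def using jp ij ab by auto
      then show ?thesis using h by force
    next
      assume h: "v = gf G i a \<and> u = gf G i b"
      have "(b,a) \<in> adj G (part G A i)" unfolding adj_def using jp ij ab by auto
      then show ?thesis using h by force
    qed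
    moreover have "i = 0 \<or> i = 1 \<or> i = 2" using ij by auto
    ultimately show "uv \<in> (\<Union>i\<in>{0,1,2}. map_prod (gf G i) (gf G i) ` adj G (part G A i))"
      using uv by blast
  next
    fix uv assume "uv \<in> (\<Union>i\<in>{0,1,2}. map_prod (gf G i) (gf G i) ` adj G (part G A i))"
    then obtain i a b where i: "i < 3" and ab: "(a,b) \<in> adj G (part G A i)" and uv: "uv = (gf G i a, gf G i b)"
    proof -
      assume h: "\<And>i a b. i < 3 \<Longrightarrow> (a, b) \<in> adj G (part G A i) \<Longrightarrow> uv = (gf G i a, gf G i b) \<Longrightarrow> thesis"
      from \<open>uv \<in> _\<close> obtain i where "i \<in> {0::nat,1,2}" "uv \<in> map_prod (gf G i) (gf G i) ` adj G (part G A i)" by blast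
      then obtain ab where ab: "ab \<in> adj G (part G A i)" "uv = map_prod (gf G i) (gf G i) ab" by (metis imageE)
      obtain a b where "ab = (a,b)" by fastforce
      then show thesis using h[of i a b] ab \<open>i \<in> _\<close> by auto
    qed
    from ab obtain j where j: "j \<in> part G A i" "?E ! j = (a,b) \<or> ?E ! j = (b,a)" unfolding adj_def by auto
    have jm: "j < ?m" using j unfolding part_def by auto
    have "j + i * ?m \<in> A" using j unfolding part_def by auto
    moreover have "j + i * ?m < 3 * ?m" using jm i
    proof -
      have "i * ?m \<le> 2 * ?m" using i by simp
      then show ?thesis using jm by linarith
    qed
    moreover have "edges (glue G) ! (j + i * ?m) = (gf G i a, gf G i b) \<or> edges (glue G) ! (j + i * ?m) = (gf G i b, gf G i a)"
      using nth[OF jm i] j(2) by auto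
    ultimately show "uv \<in> adj (glue G) A" unfolding adj_def len uv by auto
  qed
qed


datatype pat = All | LR | TL | TR | Sep

fun patrel :: "pat \<Rightarrow> cp \<Rightarrow> cp \<Rightarrow> bool" where
  "patrel All c d = True"
| "patrel LR c d = (c = d \<or> (c \<noteq> Ct \<and> d \<noteq> Ct))"
| "patrel TL c d = (c = d \<or> (c \<noteq> Cr \<and> d \<noteq> Cr))"
| "patrel TR c d = (c = d \<or> (c \<noteq> Cl \<and> d \<noteq> Cl))"
| "patrel Sep c d = (c = d)"

lemma patrel_refl: "patrel p c c" by (cases p) auto
lemma patrel_sym: "patrel p c d \<Longrightarrow> patrel p d c" by (cases p) auto

definition S0 :: "pat \<Rightarrow> pat \<Rightarrow> pat \<Rightarrow> port \<Rightarrow> port \<Rightarrow> bool" where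
  "S0 p1 p2 p3 u w = (u = w \<or> (\<exists>c d. emb 0 c = u \<and> emb 0 d = w \<and> patrel p1 c d)
     \<or> (\<exists>c d. emb 1 c = u \<and> emb 1 d = w \<and> patrel p2 c d)
     \<or> (\<exists>c d. emb 2 c = u \<and> emb 2 d = w \<and> patrel p3 c d))"

lemma ex_cp: "(\<exists>c. P c) \<longleftrightarrow> P Ct \<or> P Cl \<or> P Cr"
  apply (rule iffI) apply (erule exE) subgoal for c by (cases c) auto by auto
lemma ex_port: "(\<exists>c. P c) \<longleftrightarrow> P PT \<or> P PA \<or> P PB \<or> P PC \<or> P PL \<or> P PR"
  apply (rule iffI) apply (erule exE) subgoal for c by (cases c) auto by auto

lemma S0_simps:
  "S0 p1 p2 p3 PT PT = (True)"
  "S0 p1 p2 p3 PT PA = (patrel p1 Ct Cl)"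
  "S0 p1 p2 p3 PT PB = (patrel p1 Ct Cr)"
  "S0 p1 p2 p3 PT PC = (False)"
  "S0 p1 p2 p3 PT PL = (False)"
  "S0 p1 p2 p3 PT PR = (False)"
  "S0 p1 p2 p3 PA PT = (patrel p1 Cl Ct)"
  "S0 p1 p2 p3 PA PA = (True)"
  "S0 p1 p2 p3 PA PB = (patrel p1 Cl Cr)"
  "S0 p1 p2 p3 PA PC = (patrel p2 Ct Cr)"
  "S0 p1 p2 p3 PA PL = (patrel p2 Ct Cl)"
  "S0 p1 p2 p3 PA PR = (False)"
  "S0 p1 p2 p3 PB PT = (patrel p1 Cr Ct)"
  "S0 p1 p2 p3 PB PA = (patrel p1 Cr Cl)"
  "S0 p1 p2 p3 PB PB = (True)"
  "S0 p1 p2 p3 PB PC = (patrel p3 Ct Cl)"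
  "S0 p1 p2 p3 PB PL = (False)"
  "S0 p1 p2 p3 PB PR = (patrel p3 Ct Cr)"
  "S0 p1 p2 p3 PC PT = (False)"
  "S0 p1 p2 p3 PC PA = (patrel p2 Cr Ct)"
  "S0 p1 p2 p3 PC PB = (patrel p3 Cl Ct)"
  "S0 p1 p2 p3 PC PC = (True)"
  "S0 p1 p2 p3 PC PL = (patrel p2 Cr Cl)"
  "S0 p1 p2 p3 PC PR = (patrel p3 Cl Cr)"
  "S0 p1 p2 p3 PL PT = (False)"
  "S0 p1 p2 p3 PL PA = (patrel p2 Cl Ct)"
  "S0 p1 p2 p3 PL PB = (False)"
  "S0 p1 p2 p3 PL PC = (patrel p2 Cl Cr)"
  "S0 p1 p2 p3 PL PL = (True)"
  "S0 p1 p2 p3 PL PR = (False)"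
  "S0 p1 p2 p3 PR PT = (False)"
  "S0 p1 p2 p3 PR PA = (False)"
  "S0 p1 p2 p3 PR PB = (patrel p3 Cr Ct)"
  "S0 p1 p2 p3 PR PC = (patrel p3 Cr Cl)"
  "S0 p1 p2 p3 PR PL = (False)"
  "S0 p1 p2 p3 PR PR = (True)"
  by (simp_all add: S0_def ex_cp)

definition jl :: "pat \<Rightarrow> pat \<Rightarrow> pat \<Rightarrow> port \<Rightarrow> port" where
  "jl p1 p2 p3 u = (case u of
      PB \<Rightarrow> (if patrel p1 Cl Cr \<or> (patrel p2 Ct Cr \<and> patrel p3 Ct Cl) then PA else PB)
    | PC \<Rightarrow> (if patrel p2 Ct Cr \<or> (patrel p1 Cl Cr \<and> patrel p3 Ct Cl) then PA
             else if patrel p3 Ct Cl then PB else PC)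
    | _ \<Rightarrow> PA)"

definition lab :: "pat \<Rightarrow> pat \<Rightarrow> pat \<Rightarrow> port \<Rightarrow> port" where
  "lab p1 p2 p3 u = (case u of
      PT \<Rightarrow> (if patrel p1 Ct Cl then jl p1 p2 p3 PA else if patrel p1 Ct Cr then jl p1 p2 p3 PB else PT)
    | PL \<Rightarrow> (if patrel p2 Cl Ct then jl p1 p2 p3 PA else if patrel p2 Cl Cr then jl p1 p2 p3 PC else PL)
    | PR \<Rightarrow> (if patrel p3 Cr Ct then jl p1 p2 p3 PB else if patrel p3 Cr Cl then jl p1 p2 p3 PC else PR)
    | _ \<Rightarrow> jl p1 p2 p3 u)"

lemma S0_lab: "S0 p1 p2 p3 u w \<Longrightarrow> lab p1 p2 p3 u = lab p1 p2 p3 w"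
  by (cases u; cases w; cases p1; cases p2; cases p3; simp add: S0_simps lab_def jl_def)

definition S3 :: "pat \<Rightarrow> pat \<Rightarrow> pat \<Rightarrow> port \<Rightarrow> port \<Rightarrow> bool" where
  "S3 p1 p2 p3 u w = (S0 p1 p2 p3 u w \<or> (\<exists>z. S0 p1 p2 p3 u z \<and> S0 p1 p2 p3 z w)
     \<or> (\<exists>z z'. S0 p1 p2 p3 u z \<and> S0 p1 p2 p3 z z' \<and> S0 p1 p2 p3 z' w))"

lemma S3_lab: "S3 p1 p2 p3 u (lab p1 p2 p3 u)"
  unfolding S3_def ex_port
  by (cases u; cases p1; cases p2; cases p3; simp add: S0_simps lab_def jl_def)

definition cyc :: "pat \<Rightarrow> pat \<Rightarrow> pat \<Rightarrow> bool" where
  "cyc p1 p2 p3 \<longleftrightarrow> patrel p1 Cl Cr \<and> patrel p2 Ct Cr \<and> patrel p3 Ct Cl"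

lemma count_check:
  "cnt (\<lambda>u w. lab p1 p2 p3 u = lab p1 p2 p3 w) [PT,PA,PB,PC,PL,PR] + 3
   = cnt (patrel p1) [Ct,Cl,Cr] + cnt (patrel p2) [Ct,Cl,Cr] + cnt (patrel p3) [Ct,Cl,Cr] + (if cyc p1 p2 p3 then 1 else 0)"
  by (cases p1; cases p2; cases p3; simp add: lab_def jl_def cyc_def ex_cp)


lemma adj_sub: "good G \<Longrightarrow> adj G A \<subseteq> verts G \<times> verts G"
  unfolding adj_def good_def by (auto dest!: nth_mem)

lemma adj_sym: "sym (adj G A)"
  unfolding adj_def sym_def by auto

lemma conn_refl: "conn G A u u" unfolding conn_def by simp
lemma conn_sym: "conn G A u v \<Longrightarrow> conn G A v u"
  unfolding conn_def by (meson adj_sym sym_rtrancl symD)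
lemma conn_trans: "conn G A u v \<Longrightarrow> conn G A v w \<Longrightarrow> conn G A u w"
  unfolding conn_def by (meson rtrancl_trans)

lemma ncomp_eq: "ncomp G A = card (clsR (verts G) (adj G A) ` verts G)"
proof -
  have "verts G // {(u, v). u \<in> verts G \<and> v \<in> verts G \<and> conn G A u v} = clsR (verts G) (adj G A) ` verts G"
    unfolding quotient_def clsR_def conn_def by (auto simp: Image_def)
  then show ?thesis unfolding ncomp_def by simp
qed

lemma clsR_eq_iff:
  assumes "R \<subseteq> X \<times> X" "sym R" "u \<in> X" "v \<in> X"
  shows "clsR X R u = clsR X R v \<longleftrightarrow> (u,v) \<in> R\<^sup>*"
proof
  assume "clsR X R u = clsR X R v"
  moreover have "v \<in> clsR X R v" using assms unfolding clsR_def by auto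
  ultimately show "(u,v) \<in> R\<^sup>*" unfolding clsR_def by auto
next
  assume h: "(u,v) \<in> R\<^sup>*"
  then have "(v,u) \<in> R\<^sup>*" using assms(2) by (meson sym_rtrancl symD)
  then show "clsR X R u = clsR X R v" using h unfolding clsR_def by (auto intro: rtrancl_trans)
qed

definition pat :: "sgraph \<Rightarrow> nat set \<Rightarrow> pat" where
  "pat G A = (if conn G A (topv G) (lftv G) \<and> conn G A (lftv G) (rgtv G) then All
     else if conn G A (lftv G) (rgtv G) then LR
     else if conn G A (topv G) (lftv G) then TL
     else if conn G A (topv G) (rgtv G) then TR else Sep)"

lemma conn_pat: "conn G A (cpv G c) (cpv G d) \<longleftrightarrow> patrel (pat G A) c d"
proof -
  note sy = conn_sym[of G A] and tr = conn_trans[of G A]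
  show ?thesis
    by (cases c; cases d) (auto simp: pat_def conn_refl dest: sy intro: tr)
qed

definition npc :: "sgraph \<Rightarrow> nat set \<Rightarrow> nat" where
  "npc G A = card {C \<in> clsR (verts G) (adj G A) ` verts G. C \<inter> range (cpv G) = {}}"

lemma range_cpv: "range (cpv G) = cpv G ` set [Ct,Cl,Cr]"
proof -
  have "UNIV = set [Ct,Cl,Cr]" using cp.exhaust by auto
  then show ?thesis by metis
qed

lemma range_pv: "range (pv G) = pv G ` set [PT,PA,PB,PC,PL,PR]"
proof -
  have "UNIV = set [PT,PA,PB,PC,PL,PR]" using port.exhaust by auto
  then show ?thesis by metis
qed

lemma cpv_in: "good G \<Longrightarrow> cpv G c \<in> verts G"
  by (cases c) (auto simp: good_def)

lemma ncomp_copy: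
  assumes g: "good G"
  shows "ncomp G A = npc G A + cnt (patrel (pat G A)) [Ct,Cl,Cr]"
proof -
  have fin: "finite (verts G)" using g unfolding good_def by auto
  have P: "range (cpv G) \<subseteq> verts G" using cpv_in[OF g] by auto
  have "card (clsR (verts G) (adj G A) ` range (cpv G)) = card ((clsR (verts G) (adj G A) \<circ> cpv G) ` set [Ct,Cl,Cr])"
    unfolding range_cpv image_comp ..
  also have "\<dots> = cnt (patrel (pat G A)) [Ct,Cl,Cr]"
  proof (rule card_image_cnt)
    fix p q
    show "(clsR (verts G) (adj G A) \<circ> cpv G) p = (clsR (verts G) (adj G A) \<circ> cpv G) q \<longleftrightarrow> patrel (pat G A) p q"
      using clsR_eq_iff[OF adj_sub[OF g] adj_sym cpv_in[OF g] cpv_in[OF g]] conn_pat[of G A p q]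
      unfolding conn_def by simp
  qed
  finally show ?thesis
    unfolding ncomp_eq npc_def using cls_split[OF fin adj_sub[OF g] adj_sym P] by simp
qed

lemma cls_map:
  assumes inj: "inj f" and R: "R \<subseteq> V \<times> V" and v: "v \<in> V"
  shows "clsR (f ` V) (map_prod f f ` R) (f v) = f ` clsR V R v"
proof
  show "clsR (f ` V) (map_prod f f ` R) (f v) \<subseteq> f ` clsR V R v"
  proof
    fix w assume "w \<in> clsR (f ` V) (map_prod f f ` R) (f v)"
    then obtain v' where "v' \<in> V" "w = f v'" "(f v, f v') \<in> (map_prod f f ` R)\<^sup>*" unfolding clsR_def by auto
    then show "w \<in> f ` clsR V R v" using rtrancl_map_inj_iff[OF inj] unfolding clsR_def by auto
  qed
next
  show "f ` clsR V R v \<subseteq> clsR (f ` V) (map_prod f f ` R) (f v)"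
    using rtrancl_map_inj_iff[OF inj] unfolding clsR_def by auto
qed

lemma np_map:
  assumes inj: "inj f" and R: "R \<subseteq> V \<times> V" and PP: "\<And>v. v \<in> V \<Longrightarrow> f v \<in> P \<longleftrightarrow> v \<in> Pc"
  shows "card {C \<in> clsR (f ` V) (map_prod f f ` R) ` (f ` V). C \<inter> P = {}} = card {C \<in> clsR V R ` V. C \<inter> Pc = {}}"
proof -
  have sub: "clsR V R v \<subseteq> V" for v unfolding clsR_def by auto
  have "{C \<in> clsR (f ` V) (map_prod f f ` R) ` (f ` V). C \<inter> P = {}} = image f ` {C \<in> clsR V R ` V. C \<inter> Pc = {}}"
  proof -
    have e: "f ` clsR V R v \<inter> P = {} \<longleftrightarrow> clsR V R v \<inter> Pc = {}" for v
      using PP sub[of v] by blast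
    show ?thesis
    proof (rule set_eqI, rule iffI)
      fix C assume "C \<in> {C \<in> clsR (f ` V) (map_prod f f ` R) ` (f ` V). C \<inter> P = {}}"
      then obtain v where v: "v \<in> V" "C = clsR (f ` V) (map_prod f f ` R) (f v)" "C \<inter> P = {}" by auto
      then have "C = f ` clsR V R v" using cls_map[OF inj R] by auto
      then show "C \<in> image f ` {C \<in> clsR V R ` V. C \<inter> Pc = {}}" using e v by auto
    next
      fix C assume "C \<in> image f ` {C \<in> clsR V R ` V. C \<inter> Pc = {}}"
      then obtain v where v: "v \<in> V" "C = f ` clsR V R v" "clsR V R v \<inter> Pc = {}" by auto
      then have "C = clsR (f ` V) (map_prod f f ` R) (f v)" using cls_map[OF inj R] by auto
      then show "C \<in> {C \<in> clsR (f ` V) (map_prod f f ` R) ` (f ` V). C \<inter> P = {}}" using e v by auto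
    qed
  qed
  moreover have "inj_on (image f) {C \<in> clsR V R ` V. C \<inter> Pc = {}}"
    using inj by (meson inj_image_eq_iff inj_onI)
  ultimately show ?thesis by (simp add: card_image)
qed


definition Wg :: "sgraph \<Rightarrow> nat \<Rightarrow> nat set" where "Wg G i = gf G i ` verts G"
definition Qg :: "sgraph \<Rightarrow> nat set \<Rightarrow> nat \<Rightarrow> (nat \<times> nat) set" where
  "Qg G A i = map_prod (gf G i) (gf G i) ` adj G (part G A i)"

lemma less3: "i < (3::nat) \<Longrightarrow> i = 0 \<or> i = 1 \<or> i = 2" by auto
lemma in3: "i \<in> {0::nat,1,2} \<Longrightarrow> i < 3" by auto

lemma pieces_glue: assumes g: "good G" shows "pieces {0,1,2} (Wg G) (Qg G A) (range (pv G))"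
proof
  fix i :: nat assume "i \<in> {0,1,2}"
  show "Qg G A i \<subseteq> Wg G i \<times> Wg G i" unfolding Qg_def Wg_def using adj_sub[OF g] by auto
next
  fix i j :: nat assume "i \<in> {0,1,2}" "j \<in> {0,1,2}" "i \<noteq> j"
  then show "Wg G i \<inter> Wg G j \<subseteq> range (pv G)" unfolding Wg_def using overlap[OF g in3 in3] by blast
qed

lemma verts_glue_W: "verts (glue G) = (\<Union>i\<in>{0,1,2}. Wg G i)"
  by (auto simp: glue_simps Wg_def)

lemma adj_glue_Q: "adj (glue G) A = (\<Union>i\<in>{0,1,2}. Qg G A i)"
  by (simp add: adj_glue Qg_def)

definition labG :: "sgraph \<Rightarrow> nat set \<Rightarrow> port \<Rightarrow> port" where
  "labG G A = lab (pat G (part G A 0)) (pat G (part G A 1)) (pat G (part G A 2))"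

definition ppat :: "pat \<Rightarrow> pat \<Rightarrow> pat \<Rightarrow> nat \<Rightarrow> pat" where
  "ppat p1 p2 p3 i = (if i = 0 then p1 else if i = 1 then p2 else p3)"

lemma S0_piece: "i < 3 \<Longrightarrow> patrel (ppat p1 p2 p3 i) c d \<Longrightarrow> S0 p1 p2 p3 (emb i c) (emb i d)"
proof -
  assume "i < 3" "patrel (ppat p1 p2 p3 i) c d"
  moreover have "i = 0 \<or> i = 1 \<or> i = 2" using \<open>i < 3\<close> by auto
  ultimately show ?thesis unfolding S0_def ppat_def by (auto simp del: emb.simps)
qed

lemma S0_cases: "S0 p1 p2 p3 u w \<Longrightarrow> u = w \<or> (\<exists>i<3. \<exists>c d. emb i c = u \<and> emb i d = w \<and> patrel (ppat p1 p2 p3 i) c d)"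
proof -
  assume "S0 p1 p2 p3 u w"
  then have "u = w \<or> (\<exists>c d. emb 0 c = u \<and> emb 0 d = w \<and> patrel (ppat p1 p2 p3 0) c d)
    \<or> (\<exists>c d. emb 1 c = u \<and> emb 1 d = w \<and> patrel (ppat p1 p2 p3 1) c d)
    \<or> (\<exists>c d. emb 2 c = u \<and> emb 2 d = w \<and> patrel (ppat p1 p2 p3 2) c d)"
    unfolding S0_def ppat_def by (simp del: emb.simps)
  then consider "u = w" | "\<exists>c d. emb 0 c = u \<and> emb 0 d = w \<and> patrel (ppat p1 p2 p3 0) c d"
    | "\<exists>c d. emb 1 c = u \<and> emb 1 d = w \<and> patrel (ppat p1 p2 p3 1) c d"
    | "\<exists>c d. emb 2 c = u \<and> emb 2 d = w \<and> patrel (ppat p1 p2 p3 2) c d"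
    by blast
  then show ?thesis
  proof cases
    case 1 then show ?thesis by simp
  next
    case 2 then show ?thesis by (intro disjI2 exI[of _ 0]) (simp del: emb.simps)
  next
    case 3 then show ?thesis by (intro disjI2 exI[of _ 1]) (simp del: emb.simps)
  next
    case 4 then show ?thesis by (intro disjI2 exI[of _ 2]) (simp del: emb.simps)
  qed
qed

lemma ppat_pat: "i < 3 \<Longrightarrow> ppat (pat G (part G A 0)) (pat G (part G A 1)) (pat G (part G A 2)) i = pat G (part G A i)"
proof -
  assume "i < 3"
  then have "i = 0 \<or> i = 1 \<or> i = 2" by auto
  then show ?thesis unfolding ppat_def by (elim disjE) simp_all
qed

lemma conn_glue_ports:
  assumes g: "good G"
  shows "conn (glue G) A (pv G u) (pv G w) \<longleftrightarrow> labG G A u = labG G A w"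
proof -
  interpret pieces "{0,1,2}" "Wg G" "Qg G A" "range (pv G)" by (rule pieces_glue[OF g])
  have RR: "RR = adj (glue G) A" unfolding RR_def adj_glue_Q ..
  have XX: "XX = verts (glue G)" unfolding XX_def verts_glue_W ..
  let ?p1 = "pat G (part G A 0)" and ?p2 = "pat G (part G A 1)" and ?p3 = "pat G (part G A 2)"
  have conn_piece: "conn (glue G) A (pv G (emb i c)) (pv G (emb i d))"
    if i: "i < 3" and pr: "patrel (pat G (part G A i)) c d" for i c d
  proof -
    have "(cpv G c, cpv G d) \<in> (adj G (part G A i))\<^sup>*" using pr conn_pat[of G "part G A i" c d] unfolding conn_def by simp
    then have "(gf G i (cpv G c), gf G i (cpv G d)) \<in> (Qg G A i)\<^sup>*" unfolding Qg_def by (rule rtrancl_map_inj)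
    moreover have "i \<in> {0,1,2}" using less3[OF i] by auto
    then have "Qg G A i \<subseteq> RR" unfolding RR_def by blast
    ultimately have "(gf G i (cpv G c), gf G i (cpv G d)) \<in> RR\<^sup>*" using rtrancl_mono by blast
    then show ?thesis unfolding RR conn_def gf_cpv[OF g] .
  qed
  have S0conn: "conn (glue G) A (pv G x) (pv G y)" if "S0 ?p1 ?p2 ?p3 x y" for x y
    using S0_cases[OF that] conn_piece conn_refl ppat_pat by metis
  have S0star: "conn (glue G) A (pv G x) (pv G y)" if "(S0 ?p1 ?p2 ?p3)\<^sup>*\<^sup>* x y" for x y
    using that
  proof induct
    case base then show ?case by (rule conn_refl)
  next
    case (step y z) then show ?case using S0conn conn_trans by metis
  qed
  have S3conn: "conn (glue G) A (pv G x) (pv G y)" if "S3 ?p1 ?p2 ?p3 x y" for x y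
    using that unfolding S3_def using S0conn conn_trans by metis
  show ?thesis
  proof
    assume h: "labG G A u = labG G A w"
    have "conn (glue G) A (pv G u) (pv G (labG G A u))" using S3conn S3_lab unfolding labG_def by metis
    moreover have "conn (glue G) A (pv G w) (pv G (labG G A w))" using S3conn S3_lab unfolding labG_def by metis
    ultimately show "conn (glue G) A (pv G u) (pv G w)" using h conn_sym conn_trans by metis
  next
    assume h: "conn (glue G) A (pv G u) (pv G w)"
    define E where "E = {(pv G x, pv G y) | x y. labG G A x = labG G A y}"
    have injp: "inj (pv G)" by (rule pv_inj[OF g])
    have tE: "trans E"
    proof (rule transI)
      fix a b c assume "(a,b) \<in> E" "(b,c) \<in> E"
      then obtain x y y' z where "a = pv G x" "b = pv G y" "labG G A x = labG G A y"
        "b = pv G y'" "c = pv G z" "labG G A y' = labG G A z" unfolding E_def by blast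
      moreover have "y = y'" using injp \<open>b = pv G y\<close> \<open>b = pv G y'\<close> by (metis injD)
      ultimately show "(a,c) \<in> E" unfolding E_def by auto
    qed
    have PX: "range (pv G) \<subseteq> XX"
    proof
      fix p assume "p \<in> range (pv G)"
      then obtain u where "p = pv G u" by auto
      moreover have "pv G u \<in> Wg G 0 \<union> Wg G 1 \<union> Wg G 2"
      proof (cases u)
        case PT then show ?thesis using gf_cpv[OF g, of 0 Ct] cpv_in[OF g, of Ct] unfolding Wg_def by (auto intro!: image_eqI)
      next
        case PA then show ?thesis using gf_cpv[OF g, of 0 Cl] cpv_in[OF g, of Cl] unfolding Wg_def by (auto intro!: image_eqI)
      next
        case PB then show ?thesis using gf_cpv[OF g, of 0 Cr] cpv_in[OF g, of Cr] unfolding Wg_def by (auto intro!: image_eqI)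
      next
        case PC then show ?thesis using gf_cpv[OF g, of 1 Cr] cpv_in[OF g, of Cr] unfolding Wg_def by (auto intro!: image_eqI)
      next
        case PL then show ?thesis using gf_cpv[OF g, of 1 Cl] cpv_in[OF g, of Cl] unfolding Wg_def by (auto intro!: image_eqI)
      next
        case PR then show ?thesis using gf_cpv[OF g, of 2 Cr] cpv_in[OF g, of Cr] unfolding Wg_def by (auto intro!: image_eqI)
      qed
      ultimately show "p \<in> XX" unfolding XX_def by auto
    qed
    have Ehyp: "(p,q) \<in> E" if i: "i \<in> {0,1,2}" and p: "p \<in> range (pv G)" and q: "q \<in> range (pv G)"
      and pW: "p \<in> Wg G i" and pq: "(p,q) \<in> (Qg G A i)\<^sup>*" for i p q
    proof -
      have i3: "i < 3" using i by auto
      have qW: "q \<in> Wg G i" using rtrancl_stays[OF pq sub[OF i] pW] .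
      obtain v where v: "v \<in> verts G" "p = gf G i v" using pW unfolding Wg_def by auto
      obtain v' where v': "v' \<in> verts G" "q = gf G i v'" using qW unfolding Wg_def by auto
      have "v \<in> range (cpv G)" using gf_port_iff[OF g i3 v(1)] v p by simp
      then obtain c where c: "v = cpv G c" by auto
      have "v' \<in> range (cpv G)" using gf_port_iff[OF g i3 v'(1)] v' q by simp
      then obtain d where d: "v' = cpv G d" by auto
      have "(cpv G c, cpv G d) \<in> (adj G (part G A i))\<^sup>*"
        using pq rtrancl_map_inj_iff[OF gf_inj[OF g i3]] unfolding Qg_def v c v' d by blast
      then have "patrel (pat G (part G A i)) c d" using conn_pat unfolding conn_def by metis
      then have "S0 ?p1 ?p2 ?p3 (emb i c) (emb i d)" using S0_piece[OF i3] ppat_pat[OF i3] by metis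
      then have "labG G A (emb i c) = labG G A (emb i d)" unfolding labG_def by (rule S0_lab)
      moreover have "p = pv G (emb i c)" "q = pv G (emb i d)" using v v' c d gf_cpv[OF g] by auto
      ultimately show ?thesis unfolding E_def by blast
    qed
    have "(pv G u, pv G w) \<in> E"
      by (rule port_closed[OF PX Ehyp tE]) (use h RR in \<open>auto simp: conn_def\<close>)
    then show "labG G A u = labG G A w" unfolding E_def using injp by (auto dest: injD)
  qed
qed


lemma pv_in_glue: assumes g: "good G" shows "pv G u \<in> verts (glue G)"
proof -
  have "pv G u \<in> Wg G 0 \<union> Wg G 1 \<union> Wg G 2"
  proof (cases u)
    case PT then show ?thesis using gf_cpv[OF g, of 0 Ct] cpv_in[OF g, of Ct] unfolding Wg_def by (auto intro!: image_eqI)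
  next
    case PA then show ?thesis using gf_cpv[OF g, of 0 Cl] cpv_in[OF g, of Cl] unfolding Wg_def by (auto intro!: image_eqI)
  next
    case PB then show ?thesis using gf_cpv[OF g, of 0 Cr] cpv_in[OF g, of Cr] unfolding Wg_def by (auto intro!: image_eqI)
  next
    case PC then show ?thesis using gf_cpv[OF g, of 1 Cr] cpv_in[OF g, of Cr] unfolding Wg_def by (auto intro!: image_eqI)
  next
    case PL then show ?thesis using gf_cpv[OF g, of 1 Cl] cpv_in[OF g, of Cl] unfolding Wg_def by (auto intro!: image_eqI)
  next
    case PR then show ?thesis using gf_cpv[OF g, of 2 Cr] cpv_in[OF g, of Cr] unfolding Wg_def by (auto intro!: image_eqI)
  qed
  then show ?thesis unfolding verts_glue_W by auto
qed

definition cycG :: "sgraph \<Rightarrow> nat set \<Rightarrow> bool" where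
  "cycG G A = cyc (pat G (part G A 0)) (pat G (part G A 1)) (pat G (part G A 2))"

lemma ncomp_glue:
  assumes g: "good G"
  shows "ncomp (glue G) A + 3 = ncomp G (part G A 0) + ncomp G (part G A 1) + ncomp G (part G A 2)
           + (if cycG G A then 1 else 0)"
proof -
  interpret pieces "{0,1,2}" "Wg G" "Qg G A" "range (pv G)" by (rule pieces_glue[OF g])
  have RR: "RR = adj (glue G) A" unfolding RR_def adj_glue_Q ..
  have XX: "XX = verts (glue G)" unfolding XX_def verts_glue_W ..
  have g': "good (glue G)" by (rule good_glue[OF g])
  have fin: "finite XX" using g' XX unfolding good_def by auto
  have PX: "range (pv G) \<subseteq> XX" using pv_in_glue[OF g] XX by auto
  have "ncomp (glue G) A = card (clsR XX RR ` XX)" unfolding ncomp_eq RR XX ..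
  also have "\<dots> = card {C \<in> clsR XX RR ` XX. C \<inter> range (pv G) = {}} + card (clsR XX RR ` range (pv G))"
    by (rule cls_split[OF fin RR_sub _ PX]) (use adj_sym RR in metis)
  also have "card {C \<in> clsR XX RR ` XX. C \<inter> range (pv G) = {}}
      = (\<Sum>i\<in>{0,1,2}. card {C \<in> clsR (Wg G i) (Qg G A i) ` Wg G i. C \<inter> range (pv G) = {}})"
    by (rule np_card) (use g in \<open>auto simp: Wg_def good_def\<close>)
  also have "\<dots> = (\<Sum>i\<in>{0,1,2}. npc G (part G A i))"
  proof (rule sum.cong[OF refl])
    fix i :: nat assume "i \<in> {0,1,2}"
    then have i: "i < 3" by auto
    show "card {C \<in> clsR (Wg G i) (Qg G A i) ` Wg G i. C \<inter> range (pv G) = {}} = npc G (part G A i)"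
      unfolding Wg_def Qg_def npc_def
      by (rule np_map[OF gf_inj[OF g i] adj_sub[OF g]]) (rule gf_port_iff[OF g i])
  qed
  also have "card (clsR XX RR ` range (pv G)) = cnt (\<lambda>u w. labG G A u = labG G A w) [PT,PA,PB,PC,PL,PR]"
  proof -
    have "card (clsR XX RR ` range (pv G)) = card ((clsR XX RR \<circ> pv G) ` set [PT,PA,PB,PC,PL,PR])"
      unfolding range_pv image_comp ..
    also have "\<dots> = cnt (\<lambda>u w. labG G A u = labG G A w) [PT,PA,PB,PC,PL,PR]"
    proof (rule card_image_cnt)
      fix p q
      have "clsR XX RR (pv G p) = clsR XX RR (pv G q) \<longleftrightarrow> (pv G p, pv G q) \<in> RR\<^sup>*"
        using clsR_eq_iff[OF RR_sub _ PX[THEN subsetD] PX[THEN subsetD]] adj_sym RR by auto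
      then show "(clsR XX RR \<circ> pv G) p = (clsR XX RR \<circ> pv G) q \<longleftrightarrow> labG G A p = labG G A q"
        using conn_glue_ports[OF g] RR unfolding conn_def by simp
    qed
    finally show ?thesis .
  qed
  finally have "ncomp (glue G) A = (\<Sum>i\<in>{0,1,2}. npc G (part G A i)) + cnt (\<lambda>u w. labG G A u = labG G A w) [PT,PA,PB,PC,PL,PR]" .
  moreover have "(\<Sum>i\<in>{0,1,2}. npc G (part G A i)) = npc G (part G A 0) + npc G (part G A 1) + npc G (part G A 2)"
    by simp
  moreover have "cnt (\<lambda>u w. labG G A u = labG G A w) [PT,PA,PB,PC,PL,PR] + 3
   = cnt (patrel (pat G (part G A 0))) [Ct,Cl,Cr] + cnt (patrel (pat G (part G A 1))) [Ct,Cl,Cr]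
     + cnt (patrel (pat G (part G A 2))) [Ct,Cl,Cr] + (if cycG G A then 1 else 0)"
    unfolding labG_def cycG_def by (rule count_check)
  ultimately show ?thesis
    using ncomp_copy[OF g, of "part G A 0"] ncomp_copy[OF g, of "part G A 1"] ncomp_copy[OF g, of "part G A 2"]
    by linarith
qed

definition respat :: "pat \<Rightarrow> pat \<Rightarrow> pat \<Rightarrow> pat" where
  "respat p1 p2 p3 = (if lab p1 p2 p3 PT = lab p1 p2 p3 PL \<and> lab p1 p2 p3 PL = lab p1 p2 p3 PR then All
     else if lab p1 p2 p3 PL = lab p1 p2 p3 PR then LR
     else if lab p1 p2 p3 PT = lab p1 p2 p3 PL then TL
     else if lab p1 p2 p3 PT = lab p1 p2 p3 PR then TR else Sep)"

lemma pat_glue: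
  assumes g: "good G"
  shows "pat (glue G) A = respat (pat G (part G A 0)) (pat G (part G A 1)) (pat G (part G A 2))"
proof -
  have d: "topv G \<noteq> lftv G" "topv G \<noteq> rgtv G" "lftv G \<noteq> rgtv G" using g unfolding good_def by auto
  have e: "topv (glue G) = pv G PT" "lftv (glue G) = pv G PL" "rgtv (glue G) = pv G PR"
    using glue_simps(3) glue_simps(4)[OF d(1)] glue_simps(5)[OF d(2,3)] by auto
  have c: "conn (glue G) A (topv (glue G)) (lftv (glue G)) = (labG G A PT = labG G A PL)"
    "conn (glue G) A (lftv (glue G)) (rgtv (glue G)) = (labG G A PL = labG G A PR)"
    "conn (glue G) A (topv (glue G)) (rgtv (glue G)) = (labG G A PT = labG G A PR)"
    unfolding e by (rule conn_glue_ports[OF g])+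
  show ?thesis unfolding pat_def[of "glue G" A] respat_def c unfolding labG_def ..
qed


definition join :: "nat \<Rightarrow> nat set \<Rightarrow> nat set \<Rightarrow> nat set \<Rightarrow> nat set" where
  "join m B0 B1 B2 = B0 \<union> (\<lambda>j. j + m) ` B1 \<union> (\<lambda>j. j + 2 * m) ` B2"

lemma part_join:
  assumes "B0 \<subseteq> {..<m}" "B1 \<subseteq> {..<m}" "B2 \<subseteq> {..<m}" "m = length (edges G)"
  shows "part G (join m B0 B1 B2) 0 = B0" "part G (join m B0 B1 B2) 1 = B1" "part G (join m B0 B1 B2) 2 = B2"
  using assms unfolding part_def join_def by (auto simp: subset_iff)

lemma join_part:
  assumes A: "A \<subseteq> {..<3*m}" and m: "m = length (edges G)"
  shows "join m (part G A 0) (part G A 1) (part G A 2) = A"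
proof
  show "join m (part G A 0) (part G A 1) (part G A 2) \<subseteq> A" unfolding join_def part_def m by auto
next
  show "A \<subseteq> join m (part G A 0) (part G A 1) (part G A 2)"
  proof
    fix k assume k: "k \<in> A"
    then have "k < 3 * m" using A by auto
    then consider "k < m" | "m \<le> k \<and> k < 2 * m" | "2 * m \<le> k \<and> k < 3 * m" by linarith
    then show "k \<in> join m (part G A 0) (part G A 1) (part G A 2)"
    proof cases
      case 1 then show ?thesis using k unfolding join_def part_def m by auto
    next
      case 2
      then have "k - m \<in> part G A 1" using k unfolding part_def m by auto
      moreover have "k = (k - m) + m" using 2 by auto
      ultimately show ?thesis unfolding join_def by (metis (no_types, lifting) UnI1 UnI2 image_eqI)
    next
      case 3
      then have "k - 2 * m \<in> part G A 2" using k unfolding part_def m by auto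
      moreover have "k = (k - 2 * m) + 2 * m" using 3 by auto
      ultimately show ?thesis unfolding join_def by (metis (no_types, lifting) UnI2 image_eqI)
    qed
  qed
qed

lemma join_sub: "B0 \<subseteq> {..<m} \<Longrightarrow> B1 \<subseteq> {..<m} \<Longrightarrow> B2 \<subseteq> {..<m} \<Longrightarrow> join m B0 B1 B2 \<subseteq> {..<3*m}"
  unfolding join_def by auto

lemma part_sub: "part G A i \<subseteq> {..<length (edges G)}" unfolding part_def by auto

lemma card_join:
  assumes "B0 \<subseteq> {..<m}" "B1 \<subseteq> {..<m}" "B2 \<subseteq> {..<m}"
  shows "card (join m B0 B1 B2) = card B0 + card B1 + card B2"
proof -
  have f: "finite B0" "finite B1" "finite B2" using assms finite_subset by blast+
  have c1: "card ((\<lambda>j. j + m) ` B1) = card B1" by (rule card_image) (auto simp: inj_on_def)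
  have c2: "card ((\<lambda>j. j + 2 * m) ` B2) = card B2" by (rule card_image) (auto simp: inj_on_def)
  have d1: "B0 \<inter> (\<lambda>j. j + m) ` B1 = {}" using assms by auto
  have d2: "(B0 \<union> (\<lambda>j. j + m) ` B1) \<inter> (\<lambda>j. j + 2 * m) ` B2 = {}" using assms by auto
  show ?thesis unfolding join_def
    using card_Un_disjoint[OF _ _ d2] card_Un_disjoint[OF _ _ d1] f c1 c2 by simp
qed

lemma UNIV_cp: "(UNIV :: cp set) = {Ct, Cl, Cr}" using cp.exhaust by auto

lemma Wg_ports: assumes g: "good G" and i: "i < 3"
  shows "Wg G i \<inter> range (pv G) = pv G ` emb i ` UNIV"
proof
  show "Wg G i \<inter> range (pv G) \<subseteq> pv G ` emb i ` UNIV"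
  proof
    fix w assume w: "w \<in> Wg G i \<inter> range (pv G)"
    then obtain v where v: "v \<in> verts G" "w = gf G i v" unfolding Wg_def by auto
    then have "v \<in> range (cpv G)" using gf_port_iff[OF g i v(1)] w by auto
    then obtain c where "v = cpv G c" by auto
    then show "w \<in> pv G ` emb i ` UNIV" using v gf_cpv[OF g] by auto
  qed
next
  show "pv G ` emb i ` UNIV \<subseteq> Wg G i \<inter> range (pv G)"
    using gf_cpv[OF g] cpv_in[OF g] unfolding Wg_def by (auto simp del: emb.simps) (metis image_eqI)
qed

lemma card_verts_glue:
  assumes g: "good G"
  shows "card (verts (glue G)) + 3 = 3 * card (verts G)"
proof -
  let ?V = "verts G"
  have fin: "finite ?V" using g unfolding good_def by auto
  have cW: "card (Wg G i) = card ?V" if "i < 3" for i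
    unfolding Wg_def by (rule card_image) (meson gf_inj[OF g that] inj_on_subset subset_UNIV)
  have fW: "finite (Wg G i)" for i unfolding Wg_def using fin by auto
  have injp: "inj (pv G)" by (rule pv_inj[OF g])
  have int: "Wg G i \<inter> Wg G j = pv G ` (emb i ` UNIV \<inter> emb j ` UNIV)" if "i < 3" "j < 3" "i \<noteq> j" for i j
  proof -
    have "Wg G i \<inter> Wg G j = (Wg G i \<inter> range (pv G)) \<inter> (Wg G j \<inter> range (pv G))"
      using overlap[OF g that] unfolding Wg_def by blast
    also have "\<dots> = pv G ` (emb i ` UNIV \<inter> emb j ` UNIV)"
      unfolding Wg_ports[OF g that(1)] Wg_ports[OF g that(2)] using image_Int[OF injp] by metis
    finally show ?thesis .
  qed
  have e01: "emb 0 ` UNIV \<inter> emb 1 ` UNIV = {PA}" by (auto simp: UNIV_cp)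
  have e02: "emb 0 ` UNIV \<inter> emb 2 ` UNIV = {PB}" by (auto simp: UNIV_cp)
  have e12: "emb 1 ` UNIV \<inter> emb 2 ` UNIV = {PC}" by (auto simp: UNIV_cp)
  have i01: "Wg G 0 \<inter> Wg G 1 = {pv G PA}" using int[of 0 1] e01 by simp
  have i012: "(Wg G 0 \<union> Wg G 1) \<inter> Wg G 2 = {pv G PB, pv G PC}" using int[of 0 2] int[of 1 2] e02 e12 by auto
  have "pv G PB \<noteq> pv G PC" using injp by (metis injD port.distinct)
  then have c2: "card {pv G PB, pv G PC} = 2" by simp
  have "card (Wg G 0) + card (Wg G 1) = card (Wg G 0 \<union> Wg G 1) + 1"
    using card_Un_Int[OF fW fW, of 0 1] i01 by simp
  moreover have "card (Wg G 0 \<union> Wg G 1) + card (Wg G 2) = card (Wg G 0 \<union> Wg G 1 \<union> Wg G 2) + 2"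
    using card_Un_Int[of "Wg G 0 \<union> Wg G 1" "Wg G 2"] fW i012 c2 by simp
  moreover have "verts (glue G) = Wg G 0 \<union> Wg G 1 \<union> Wg G 2" unfolding verts_glue_W by auto
  ultimately show ?thesis using cW[of 0] cW[of 1] cW[of 2] by simp
qed

lemma good_triangle: "good triangle" by (simp add: good_def triangle_def)

lemma good_Gamma: "good (Gamma n)"
  by (induct n rule: Gamma.induct) (auto simp: good_triangle good_glue)

lemma Gamma_Suc: "n \<ge> 1 \<Longrightarrow> Gamma (Suc n) = glue (Gamma n)"
  by (cases n) auto

lemma ncomp_ge1: assumes g: "good G" shows "1 \<le> ncomp G A"
proof -
  have "finite (verts G)" "topv G \<in> verts G" using g unfolding good_def by auto
  then show ?thesis unfolding ncomp_eq by (metis One_nat_def Suc_leI card_gt_0_iff empty_iff finite_imageI image_is_empty)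
qed

lemma ncomp_le: assumes g: "good G" shows "ncomp G A \<le> card (verts G)"
proof -
  have "finite (verts G)" using g unfolding good_def by auto
  then show ?thesis unfolding ncomp_eq by (rule card_image_le)
qed

lemma ncomp1_conn:
  assumes g: "good G" and k: "ncomp G A = 1" and u: "u \<in> verts G" and v: "v \<in> verts G"
  shows "conn G A u v"
proof -
  from k obtain C where C: "clsR (verts G) (adj G A) ` verts G = {C}" unfolding ncomp_eq by (rule card_1_singletonE)
  then have "clsR (verts G) (adj G A) u = clsR (verts G) (adj G A) v" using u v by blast
  then show ?thesis using clsR_eq_iff[OF adj_sub[OF g] adj_sym u v] unfolding conn_def by simp
qed

definition invG :: "sgraph \<Rightarrow> bool" where
  "invG G \<longleftrightarrow> good G \<and> ncomp G {..<length (edges G)} = 1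
     \<and> (\<forall>A \<subseteq> {..<length (edges G)}. card (verts G) \<le> card A + ncomp G A)"

lemma weight_formula:
  assumes inv: "invG G" and A: "A \<subseteq> {..<length (edges G)}"
  shows "weight G A x y = (x - 1) ^ (ncomp G A - 1) * (y - 1) ^ (card A + ncomp G A - card (verts G))"
proof -
  have g: "good G" using inv unfolding invG_def by auto
  have k1: "1 \<le> ncomp G A" "ncomp G A \<le> card (verts G)" using ncomp_ge1[OF g] ncomp_le[OF g] by auto
  have full: "ncomp G {..<length (edges G)} = 1" using inv unfolding invG_def by auto
  have le: "card (verts G) \<le> card A + ncomp G A" using inv A unfolding invG_def by auto
  have e1: "rk G {..<length (edges G)} - rk G A = ncomp G A - 1"
    unfolding rk_def full using k1 by linarith
  have e2: "nul G A = card A + ncomp G A - card (verts G)"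
    unfolding nul_def rk_def using k1 le by linarith
  show ?thesis unfolding weight_def e1 e2 ..
qed

lemma pat_full: assumes g: "good G" and k: "ncomp G A = 1" shows "pat G A = All"
  using ncomp1_conn[OF g k] g unfolding pat_def good_def by auto

lemma part_full: "i < 3 \<Longrightarrow> part G {..<3 * length (edges G)} i = {..<length (edges G)}"
proof -
  assume i: "i < 3"
  have "j + i * length (edges G) < 3 * length (edges G)" if "j < length (edges G)" for j
  proof -
    have "i * length (edges G) \<le> 2 * length (edges G)" using i by simp
    then show ?thesis using that by linarith
  qed
  then show ?thesis unfolding part_def by auto
qed

lemma len_glue: "length (edges (glue G)) = 3 * length (edges G)" by (simp add: glue_simps)

lemma inv_glue:
  assumes inv: "invG G"
  shows "invG (glue G)"
proof -
  have g: "good G" using inv unfolding invG_def by auto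
  let ?m = "length (edges G)"
  have full: "ncomp G {..<?m} = 1" using inv unfolding invG_def by auto
  have cv: "card (verts (glue G)) + 3 = 3 * card (verts G)" by (rule card_verts_glue[OF g])
  have "ncomp (glue G) {..<3 * ?m} + 3 = 1 + 1 + 1 + 1"
    using ncomp_glue[OF g, of "{..<3 * ?m}"] part_full[of 0 G] part_full[of 1 G] part_full[of 2 G] full
      pat_full[OF g full]
    by (simp add: cycG_def cyc_def)
  then have f: "ncomp (glue G) {..<length (edges (glue G))} = 1" unfolding len_glue by simp
  have "card (verts (glue G)) \<le> card A + ncomp (glue G) A" if A: "A \<subseteq> {..<length (edges (glue G))}" for A
  proof -
    have A': "A \<subseteq> {..<3 * ?m}" using A len_glue by metis
    have cA: "card A = card (part G A 0) + card (part G A 1) + card (part G A 2)"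
      using card_join[OF part_sub part_sub part_sub, of G A 0 A 1 A 2] join_part[OF A' refl] by simp
    have h: "card (verts G) \<le> card (part G A i) + ncomp G (part G A i)" for i
      using inv part_sub[of G A i] unfolding invG_def by blast
    have "ncomp G (part G A 0) + ncomp G (part G A 1) + ncomp G (part G A 2) \<le> ncomp (glue G) A + 3"
      using ncomp_glue[OF g, of A] by simp
    then show ?thesis using h[of 0] h[of 1] h[of 2] cA cv by linarith
  qed
  then show ?thesis unfolding invG_def using good_glue[OF g] f by blast
qed

lemma wexp: "(a::real) ^ (e0 + e1 + e2) * b ^ (f0 + f1 + f2) = (a ^ e0 * b ^ f0) * (a ^ e1 * b ^ f1) * (a ^ e2 * b ^ f2)"
  by (simp add: power_add algebra_simps)

lemma weight_glue:
  assumes inv: "invG G" and A: "A \<subseteq> {..<3 * length (edges G)}"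
  shows "(if cycG G A then 1 else (x - 1)) * weight (glue G) A x y
         = (if cycG G A then (y - 1) else 1) * (weight G (part G A 0) x y * weight G (part G A 1) x y * weight G (part G A 2) x y)"
proof -
  have g: "good G" using inv unfolding invG_def by auto
  have inv': "invG (glue G)" by (rule inv_glue[OF inv])
  let ?V = "card (verts G)" and ?V' = "card (verts (glue G))"
  define k0 where "k0 = ncomp G (part G A 0)"
  define k1 where "k1 = ncomp G (part G A 1)"
  define k2 where "k2 = ncomp G (part G A 2)"
  define a0 where "a0 = card (part G A 0)"
  define a1 where "a1 = card (part G A 1)"
  define a2 where "a2 = card (part G A 2)"
  define k' where "k' = ncomp (glue G) A"
  define a' where "a' = card A"
  have cv: "?V' + 3 = 3 * ?V" by (rule card_verts_glue[OF g])
  have cA: "a' = a0 + a1 + a2"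
    using card_join[OF part_sub part_sub part_sub, of G A 0 A 1 A 2] join_part[OF A refl] a'_def a0_def a1_def a2_def by simp
  have kk: "k' + 3 = k0 + k1 + k2 + (if cycG G A then 1 else 0)" using ncomp_glue[OF g, of A] k0_def k1_def k2_def k'_def by simp
  have kb: "1 \<le> k0" "1 \<le> k1" "1 \<le> k2" "1 \<le> k'" using ncomp_ge1[OF g] ncomp_ge1[OF good_glue[OF g]] k0_def k1_def k2_def k'_def by auto
  have ab: "?V \<le> a0 + k0" "?V \<le> a1 + k1" "?V \<le> a2 + k2"
    using inv part_sub[of G A] unfolding invG_def k0_def k1_def k2_def a0_def a1_def a2_def by blast+
  have w0: "weight G (part G A 0) x y = (x - 1) ^ (k0 - 1) * (y - 1) ^ (a0 + k0 - ?V)"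
    using weight_formula[OF inv part_sub] k0_def a0_def by simp
  have w1: "weight G (part G A 1) x y = (x - 1) ^ (k1 - 1) * (y - 1) ^ (a1 + k1 - ?V)"
    using weight_formula[OF inv part_sub] k1_def a1_def by simp
  have w2: "weight G (part G A 2) x y = (x - 1) ^ (k2 - 1) * (y - 1) ^ (a2 + k2 - ?V)"
    using weight_formula[OF inv part_sub] k2_def a2_def by simp
  have A'': "A \<subseteq> {..<length (edges (glue G))}" using A len_glue by metis
  have w': "weight (glue G) A x y = (x - 1) ^ (k' - 1) * (y - 1) ^ (a' + k' - ?V')"
    using weight_formula[OF inv' A''] k'_def a'_def by simp
  show ?thesis
  proof (cases "cycG G A")
    case True
    have e1: "k' - 1 = (k0 - 1) + (k1 - 1) + (k2 - 1)" using kk kb True by simp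
    have e2: "a' + k' - ?V' = Suc ((a0 + k0 - ?V) + (a1 + k1 - ?V) + (a2 + k2 - ?V))"
      using kk kb ab cA cv True by simp
    show ?thesis using True unfolding w' w0 w1 w2 wexp[symmetric] e1 e2 by (simp add: mult_ac)
  next
    case False
    have e1: "Suc (k' - 1) = (k0 - 1) + (k1 - 1) + (k2 - 1)" using kk kb False by simp
    have e2: "a' + k' - ?V' = (a0 + k0 - ?V) + (a1 + k1 - ?V) + (a2 + k2 - ?V)"
      using kk kb ab cA cv False by simp
    have "(x - 1) * (x - 1) ^ (k' - 1) = (x - 1) ^ ((k0 - 1) + (k1 - 1) + (k2 - 1))"
      unfolding e1[symmetric] by simp
    then show ?thesis using False unfolding w' w0 w1 w2 wexp[symmetric] e2 by (simp add: mult_ac)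
  qed
qed


definition Psum :: "sgraph \<Rightarrow> pat \<Rightarrow> real \<Rightarrow> real \<Rightarrow> real" where
  "Psum G q x y = (\<Sum>A\<in>{A \<in> Pow {..<length (edges G)}. pat G A = q}. weight G A x y)"

lemma UNIV_pat: "(UNIV :: pat set) = {All, LR, TL, TR, Sep}" using pat.exhaust by auto

lemma finite_pat: "finite (UNIV :: pat set)" unfolding UNIV_pat by simp

lemma grp:
  "(\<Sum>B\<in>Pow {..<length (edges G)}. f (pat G B) * weight G B x y) = (\<Sum>p\<in>UNIV. f p * Psum G p x y)"
proof -
  have "(\<Sum>B\<in>Pow {..<length (edges G)}. f (pat G B) * weight G B x y)
     = (\<Sum>p\<in>UNIV. \<Sum>B\<in>{B \<in> Pow {..<length (edges G)}. pat G B = p}. f (pat G B) * weight G B x y)"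
    by (rule sum.group[symmetric]) (auto simp: finite_pat)
  also have "\<dots> = (\<Sum>p\<in>UNIV. f p * Psum G p x y)"
    unfolding Psum_def by (rule sum.cong[OF refl]) (simp add: sum_distrib_left)
  finally show ?thesis .
qed

definition coef :: "real \<Rightarrow> real \<Rightarrow> pat \<Rightarrow> pat \<Rightarrow> pat \<Rightarrow> real" where
  "coef x y p1 p2 p3 = (if cyc p1 p2 p3 then y - 1 else 1 / (x - 1))"

lemma weight_glue':
  assumes inv: "invG G" and A: "A \<subseteq> {..<3 * length (edges G)}" and x: "x \<noteq> 1"
  shows "weight (glue G) A x y = coef x y (pat G (part G A 0)) (pat G (part G A 1)) (pat G (part G A 2))
     * (weight G (part G A 0) x y * weight G (part G A 1) x y * weight G (part G A 2) x y)"
  using weight_glue[OF inv A, of x y] x unfolding coef_def cycG_def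
  by (auto simp: field_simps split: if_splits)

lemma Psum_glue:
  assumes inv: "invG G" and x: "x \<noteq> 1"
  shows "Psum (glue G) q x y = (\<Sum>p1\<in>UNIV. (\<Sum>p2\<in>UNIV. (\<Sum>p3\<in>UNIV.
      (if respat p1 p2 p3 = q then coef x y p1 p2 p3 else 0) * Psum G p3 x y) * Psum G p2 x y) * Psum G p1 x y)"
proof -
  have g: "good G" using inv unfolding invG_def by auto
  let ?m = "length (edges G)"
  let ?S = "Pow {..<?m}"
  define F where "F p1 p2 p3 = (if respat p1 p2 p3 = q then coef x y p1 p2 p3 else 0)" for p1 p2 p3
  let ?w = "\<lambda>B. weight G B x y"
  have "Psum (glue G) q x y = (\<Sum>A\<in>Pow {..<3 * ?m}. if pat (glue G) A = q then weight (glue G) A x y else 0)"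
    unfolding Psum_def len_glue by (rule sum.inter_filter) simp
  also have "\<dots> = (\<Sum>A\<in>Pow {..<3 * ?m}. F (pat G (part G A 0)) (pat G (part G A 1)) (pat G (part G A 2))
                   * (?w (part G A 0) * ?w (part G A 1) * ?w (part G A 2)))"
    by (rule sum.cong[OF refl]) (simp add: F_def pat_glue[OF g] weight_glue'[OF inv _ x])
  also have "\<dots> = (\<Sum>B\<in>?S \<times> ?S \<times> ?S. F (pat G (fst B)) (pat G (fst (snd B))) (pat G (snd (snd B)))
                   * (?w (fst B) * ?w (fst (snd B)) * ?w (snd (snd B))))"
  proof (rule sum.reindex_bij_witness[of _ "\<lambda>B. join ?m (fst B) (fst (snd B)) (snd (snd B))"
          "\<lambda>A. (part G A 0, part G A 1, part G A 2)"])
    fix A assume "A \<in> Pow {..<3 * ?m}"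
    then show "join ?m (fst (part G A 0, part G A 1, part G A 2)) (fst (snd (part G A 0, part G A 1, part G A 2)))
        (snd (snd (part G A 0, part G A 1, part G A 2))) = A"
      using join_part[of A ?m G] by auto
    show "(part G A 0, part G A 1, part G A 2) \<in> ?S \<times> ?S \<times> ?S" using part_sub by auto
    show "F (pat G (fst (part G A 0, part G A 1, part G A 2))) (pat G (fst (snd (part G A 0, part G A 1, part G A 2))))
         (pat G (snd (snd (part G A 0, part G A 1, part G A 2)))) *
        (?w (fst (part G A 0, part G A 1, part G A 2)) * ?w (fst (snd (part G A 0, part G A 1, part G A 2))) *
         ?w (snd (snd (part G A 0, part G A 1, part G A 2)))) =
        F (pat G (part G A 0)) (pat G (part G A 1)) (pat G (part G A 2)) *
        (?w (part G A 0) * ?w (part G A 1) * ?w (part G A 2))" by simp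
  next
    fix B assume B: "B \<in> ?S \<times> ?S \<times> ?S"
    obtain B0 B1 B2 where b: "B = (B0, B1, B2)" by (cases B) auto
    have s: "B0 \<subseteq> {..<?m}" "B1 \<subseteq> {..<?m}" "B2 \<subseteq> {..<?m}" using B b by auto
    show "(part G (join ?m (fst B) (fst (snd B)) (snd (snd B))) 0, part G (join ?m (fst B) (fst (snd B)) (snd (snd B))) 1,
          part G (join ?m (fst B) (fst (snd B)) (snd (snd B))) 2) = B"
      using part_join[OF s refl] b by simp
    show "join ?m (fst B) (fst (snd B)) (snd (snd B)) \<in> Pow {..<3 * ?m}" using join_sub[OF s] b by simp
  qed
  also have "\<dots> = (\<Sum>B0\<in>?S. \<Sum>B1\<in>?S. \<Sum>B2\<in>?S. F (pat G B0) (pat G B1) (pat G B2) * (?w B0 * ?w B1 * ?w B2))"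
    by (simp add: sum.cartesian_product split_def)
  also have "\<dots> = (\<Sum>B0\<in>?S. \<Sum>B1\<in>?S. ?w B0 * ?w B1 * (\<Sum>p3\<in>UNIV. F (pat G B0) (pat G B1) p3 * Psum G p3 x y))"
  proof -
    have "(\<Sum>B2\<in>?S. F a b (pat G B2) * (?w B0 * ?w B1 * ?w B2)) = ?w B0 * ?w B1 * (\<Sum>p3\<in>UNIV. F a b p3 * Psum G p3 x y)"
      for a b B0 B1
    proof -
      have "(\<Sum>B2\<in>?S. F a b (pat G B2) * (?w B0 * ?w B1 * ?w B2)) = ?w B0 * ?w B1 * (\<Sum>B2\<in>?S. F a b (pat G B2) * ?w B2)"
        by (simp add: sum_distrib_left mult_ac)
      then show ?thesis using grp[of "\<lambda>p. F a b p" G x y] by simp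
    qed
    then show ?thesis by simp
  qed
  also have "\<dots> = (\<Sum>B0\<in>?S. ?w B0 * (\<Sum>p2\<in>UNIV. (\<Sum>p3\<in>UNIV. F (pat G B0) p2 p3 * Psum G p3 x y) * Psum G p2 x y))"
  proof -
    have "(\<Sum>B1\<in>?S. ?w B0 * ?w B1 * (\<Sum>p3\<in>UNIV. F a (pat G B1) p3 * Psum G p3 x y))
        = ?w B0 * (\<Sum>p2\<in>UNIV. (\<Sum>p3\<in>UNIV. F a p2 p3 * Psum G p3 x y) * Psum G p2 x y)" for a B0
    proof -
      have "(\<Sum>B1\<in>?S. ?w B0 * ?w B1 * (\<Sum>p3\<in>UNIV. F a (pat G B1) p3 * Psum G p3 x y))
         = ?w B0 * (\<Sum>B1\<in>?S. (\<Sum>p3\<in>UNIV. F a (pat G B1) p3 * Psum G p3 x y) * ?w B1)"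
        by (simp add: sum_distrib_left mult_ac)
      then show ?thesis using grp[of "\<lambda>p. (\<Sum>p3\<in>UNIV. F a p p3 * Psum G p3 x y)" G x y] by simp
    qed
    then show ?thesis by simp
  qed
  also have "\<dots> = (\<Sum>p1\<in>UNIV. (\<Sum>p2\<in>UNIV. (\<Sum>p3\<in>UNIV. F p1 p2 p3 * Psum G p3 x y) * Psum G p2 x y) * Psum G p1 x y)"
  proof -
    have "(\<Sum>B0\<in>?S. ?w B0 * (\<Sum>p2\<in>UNIV. (\<Sum>p3\<in>UNIV. F (pat G B0) p2 p3 * Psum G p3 x y) * Psum G p2 x y))
      = (\<Sum>B0\<in>?S. (\<Sum>p2\<in>UNIV. (\<Sum>p3\<in>UNIV. F (pat G B0) p2 p3 * Psum G p3 x y) * Psum G p2 x y) * ?w B0)"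
      by (simp add: mult_ac)
    then show ?thesis
      using grp[of "\<lambda>p. (\<Sum>p2\<in>UNIV. (\<Sum>p3\<in>UNIV. F p p2 p3 * Psum G p3 x y) * Psum G p2 x y)" G x y]
      by simp
  qed
  finally show ?thesis unfolding F_def .
qed


definition cd :: "real \<Rightarrow> real \<Rightarrow> pat \<Rightarrow> pat \<Rightarrow> pat \<Rightarrow> real" where
  "cd y d p1 p2 p3 = (if cyc p1 p2 p3 then y - 1 else d)"

definition RS :: "real \<Rightarrow> real \<Rightarrow> (pat \<Rightarrow> real) \<Rightarrow> pat \<Rightarrow> real" where
  "RS y d P q = (\<Sum>p1\<in>UNIV. (\<Sum>p2\<in>UNIV. (\<Sum>p3\<in>UNIV.
      (if respat p1 p2 p3 = q then cd y d p1 p2 p3 else 0) * P p3) * P p2) * P p1)"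

lemma RS_expand: "RS y d P q = (\<Sum>p1\<in>{All, LR, TL, TR, Sep}. (\<Sum>p2\<in>{All, LR, TL, TR, Sep}. (\<Sum>p3\<in>{All, LR, TL, TR, Sep}.
      (if respat p1 p2 p3 = q then cd y d p1 p2 p3 else 0) * P p3) * P p2) * P p1)"
  unfolding RS_def UNIV_pat ..

lemma RS_All: assumes "P TL = P LR" "P TR = P LR"
  shows "RS y d P All = (y - 1) * P All ^ 3 + d * (6 * P All ^ 2 * P LR + 3 * P All * P LR ^ 2)"
  unfolding RS_expand using assms
  by (simp add: respat_def lab_def jl_def cd_def cyc_def) (simp add: algebra_simps power2_eq_square power3_eq_cube)

lemma RS_LR: assumes "P TL = P LR" "P TR = P LR"
  shows "RS y d P LR = (y - 1) * P All ^ 2 * P LR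
     + d * (P All ^ 2 * P Sep + 7 * P All * P LR ^ 2 + 2 * P All * P LR * P Sep + 4 * P LR ^ 3 + P LR ^ 2 * P Sep)"
  unfolding RS_expand using assms
  by (simp add: respat_def lab_def jl_def cd_def cyc_def) (simp add: algebra_simps power2_eq_square power3_eq_cube)

lemma RS_TL: assumes "P TL = P LR" "P TR = P LR"
  shows "RS y d P TL = (y - 1) * P All ^ 2 * P LR
     + d * (P All ^ 2 * P Sep + 7 * P All * P LR ^ 2 + 2 * P All * P LR * P Sep + 4 * P LR ^ 3 + P LR ^ 2 * P Sep)"
  unfolding RS_expand using assms
  by (simp add: respat_def lab_def jl_def cd_def cyc_def) (simp add: algebra_simps power2_eq_square power3_eq_cube)

lemma RS_TR: assumes "P TL = P LR" "P TR = P LR"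
  shows "RS y d P TR = (y - 1) * P All ^ 2 * P LR
     + d * (P All ^ 2 * P Sep + 7 * P All * P LR ^ 2 + 2 * P All * P LR * P Sep + 4 * P LR ^ 3 + P LR ^ 2 * P Sep)"
  unfolding RS_expand using assms
  by (simp add: respat_def lab_def jl_def cd_def cyc_def) (simp add: algebra_simps power2_eq_square power3_eq_cube)

lemma RS_Sep: assumes "P TL = P LR" "P TR = P LR"
  shows "RS y d P Sep = (y - 1) * (3 * P All * P LR ^ 2 + P LR ^ 3)
     + d * (12 * P All * P LR * P Sep + 3 * P All * P Sep ^ 2 + 14 * P LR ^ 3 + 24 * P LR ^ 2 * P Sep
            + 9 * P LR * P Sep ^ 2 + P Sep ^ 3)"
  unfolding RS_expand using assms
  by (simp add: respat_def lab_def jl_def cd_def cyc_def) (simp add: algebra_simps power2_eq_square power3_eq_cube)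

lemma Psum_glue_RS:
  assumes inv: "invG G" and x: "x \<noteq> 1"
  shows "Psum (glue G) q x y = RS y (1 / (x - 1)) (\<lambda>p. Psum G p x y) q"
  unfolding Psum_glue[OF inv x] RS_def cd_def coef_def ..


lemma adj_tri: "adj triangle A = {(u,v). (0 \<in> A \<and> ((u,v) = (0,1) \<or> (u,v) = (1,0)))
   \<or> (1 \<in> A \<and> ((u,v) = (0,2) \<or> (u,v) = (2,0))) \<or> (2 \<in> A \<and> ((u,v) = (1,2) \<or> (u,v) = (2,1)))}"
proof -
  have "(\<exists>i\<in>A. i < 3 \<and> P i) \<longleftrightarrow> (0 \<in> A \<and> P 0) \<or> (1 \<in> A \<and> P 1) \<or> (2 \<in> A \<and> P 2)" for P :: "nat \<Rightarrow> bool"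
  proof
    assume "\<exists>i\<in>A. i < 3 \<and> P i"
    then obtain i where "i \<in> A" "i < 3" "P i" by blast
    moreover have "i = 0 \<or> i = 1 \<or> i = 2" using \<open>i < 3\<close> by auto
    ultimately show "(0 \<in> A \<and> P 0) \<or> (1 \<in> A \<and> P 1) \<or> (2 \<in> A \<and> P 2)" by auto
  next
    assume "(0 \<in> A \<and> P 0) \<or> (1 \<in> A \<and> P 1) \<or> (2 \<in> A \<and> P 2)"
    then show "\<exists>i\<in>A. i < 3 \<and> P i"
    proof (elim disjE)
      assume "0 \<in> A \<and> P 0" then show ?thesis by (intro bexI[of _ 0]) auto
    next
      assume "1 \<in> A \<and> P 1" then show ?thesis by (intro bexI[of _ 1]) auto
    next
      assume "2 \<in> A \<and> P 2" then show ?thesis by (intro bexI[of _ 2]) auto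
    qed
  qed
  note ex3 = this
  have ed: "edges triangle = [(0,1),(0,2),(1,2)]" "length (edges triangle) = 3" by (simp_all add: triangle_def)
  show ?thesis unfolding adj_def ed(2) ex3 unfolding ed(1) by auto
qed

lemma conn_closed:
  assumes "conn G A u v" "u \<in> Z" "\<And>a b. (a,b) \<in> adj G A \<Longrightarrow> a \<in> Z \<Longrightarrow> b \<in> Z"
  shows "v \<in> Z"
  using assms(1) unfolding conn_def
proof induct
  case base then show ?case using assms(2) .
next
  case (step a b) then show ?case using assms(3) by blast
qed

lemma conn_edge: "(u,v) \<in> adj G A \<Longrightarrow> conn G A u v"
  unfolding conn_def by auto

lemma tri_verts: "verts triangle = {0,1,2}" "topv triangle = 0" "lftv triangle = 1" "rgtv triangle = 2"
  "length (edges triangle) = 3"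
  by (simp_all add: triangle_def)

lemma npc_tri: "npc triangle A = 0"
proof -
  have "range (cpv triangle) = {0,1,2}" unfolding range_cpv by (simp add: tri_verts)
  moreover have "v \<in> clsR (verts triangle) (adj triangle A) v" if "v \<in> verts triangle" for v
    using that unfolding clsR_def by auto
  ultimately have e: "{C \<in> clsR (verts triangle) (adj triangle A) ` verts triangle. C \<inter> range (cpv triangle) = {}} = {}"
    by (auto simp: tri_verts)
  show ?thesis unfolding npc_def e by simp
qed

lemma ncomp_tri: "ncomp triangle A = cnt (patrel (pat triangle A)) [Ct,Cl,Cr]"
  using ncomp_copy[OF good_triangle] npc_tri by simp

lemma tri_neg: "\<not> conn triangle A u v" if "u \<in> Z" "v \<notin> Z" "\<And>a b. (a,b) \<in> adj triangle A \<Longrightarrow> a \<in> Z \<Longrightarrow> b \<in> Z" for A u v Z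
  using conn_closed[of triangle A u v Z] that by blast

lemma tri_pos: "(u,v) \<in> adj triangle A \<Longrightarrow> conn triangle A u v" by (rule conn_edge)

lemma tri_pats:
  "pat triangle {} = Sep" "pat triangle {0} = TL" "pat triangle {1} = TR" "pat triangle {2} = LR"
  "pat triangle {0,1} = All" "pat triangle {0,2} = All" "pat triangle {1,2} = All" "pat triangle {0,1,2} = All"
proof -
  have a: "\<not> conn triangle {} 0 1" "\<not> conn triangle {} 1 2" "\<not> conn triangle {} 0 2"
    subgoal by (rule tri_neg[of 0 "{0}"]; simp add: adj_tri)
    subgoal by (rule tri_neg[of 1 "{1}"]; simp add: adj_tri)
    subgoal by (rule tri_neg[of 0 "{0}"]; simp add: adj_tri)
    done
  show "pat triangle {} = Sep" unfolding pat_def tri_verts using a by simp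
  have b: "conn triangle {0} 0 1" "\<not> conn triangle {0} 1 2"
    by (rule tri_pos, simp add: adj_tri) (rule tri_neg[of 1 "{0,1}"]; auto simp: adj_tri)
  show "pat triangle {0} = TL" unfolding pat_def tri_verts using b by simp
  have c: "\<not> conn triangle {1} 0 1" "\<not> conn triangle {1} 1 2" "conn triangle {1} 0 2"
    subgoal by (rule tri_neg[of 0 "{0,2}"]; auto simp: adj_tri)
    subgoal by (rule tri_neg[of 1 "{1}"]; auto simp: adj_tri)
    subgoal by (rule tri_pos, simp add: adj_tri)
    done
  show "pat triangle {1} = TR" unfolding pat_def tri_verts using c by simp
  have d: "\<not> conn triangle {2} 0 1" "conn triangle {2} 1 2"
    by (rule tri_neg[of 0 "{0}"]; auto simp: adj_tri) (rule tri_pos, simp add: adj_tri)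
  show "pat triangle {2} = LR" unfolding pat_def tri_verts using d by simp
  have e: "conn triangle {0,1} 0 1" "conn triangle {0,1} 0 2"
    by (rule tri_pos, simp add: adj_tri)+
  then have "conn triangle {0,1} 1 2" using conn_sym conn_trans by metis
  then show "pat triangle {0,1} = All" unfolding pat_def tri_verts using e by simp
  have f: "conn triangle {0,2} 0 1" "conn triangle {0,2} 1 2"
    by (rule tri_pos, simp add: adj_tri)+
  then show "pat triangle {0,2} = All" unfolding pat_def tri_verts by simp
  have h: "conn triangle {1,2} 0 2" "conn triangle {1,2} 1 2"
    by (rule tri_pos, simp add: adj_tri)+
  then have "conn triangle {1,2} 0 1" using conn_sym conn_trans by metis
  then show "pat triangle {1,2} = All" unfolding pat_def tri_verts using h by simp
  have k: "conn triangle {0,1,2} 0 1" "conn triangle {0,1,2} 1 2"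
    by (rule tri_pos, simp add: adj_tri)+
  then show "pat triangle {0,1,2} = All" unfolding pat_def tri_verts by simp
qed

lemma sum_Pow_insert:
  assumes "a \<notin> A" "finite A"
  shows "(\<Sum>B\<in>Pow (insert a A). f B) = (\<Sum>B\<in>Pow A. f B + f (insert a B))"
proof -
  have d: "Pow A \<inter> insert a ` Pow A = {}" using assms by auto
  have i: "inj_on (insert a) (Pow A)" using assms unfolding inj_on_def by (auto simp: insert_ident)
  have "(\<Sum>B\<in>Pow (insert a A). f B) = (\<Sum>B\<in>Pow A. f B) + (\<Sum>B\<in>insert a ` Pow A. f B)"
    unfolding Pow_insert using d assms by (simp add: sum.union_disjoint)
  also have "(\<Sum>B\<in>insert a ` Pow A. f B) = (\<Sum>B\<in>Pow A. f (insert a B))" using sum.reindex[OF i] by simp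
  finally show ?thesis by (simp add: sum.distrib)
qed

lemma ball_Pow_insert: "(\<forall>B\<in>Pow (insert a A). P B) \<longleftrightarrow> (\<forall>B\<in>Pow A. P B \<and> P (insert a B))"
  unfolding Pow_insert by auto

lemma lt3: "{..<3::nat} = {0,1,2}" by auto

lemmas tri_pats' = tri_pats[simplified]

lemma ncomp_tri_full: "ncomp triangle {0,1,2} = 1"
  unfolding ncomp_tri using tri_pats'(8) by (simp add: ex_cp)

lemma weight_tri: "weight triangle A x y = (x - 1) ^ (2 - (3 - ncomp triangle A)) * (y - 1) ^ (card A - (3 - ncomp triangle A))"
  unfolding weight_def rk_def nul_def tri_verts lt3 using ncomp_tri_full by (simp add: tri_verts numeral_3_eq_3 numeral_2_eq_2)

lemma tri_Psum:
  "Psum triangle All x y = y + 2" "Psum triangle LR x y = x - 1" "Psum triangle TL x y = x - 1"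
  "Psum triangle TR x y = x - 1" "Psum triangle Sep x y = (x - 1) ^ 2"
proof -
  have e: "Psum triangle q x y = (\<Sum>A\<in>Pow {0,1,2}. if pat triangle A = q then weight triangle A x y else 0)" for q
    unfolding Psum_def tri_verts lt3 by (rule sum.inter_filter) simp
  show "Psum triangle All x y = y + 2" "Psum triangle LR x y = x - 1" "Psum triangle TL x y = x - 1"
    "Psum triangle TR x y = x - 1" "Psum triangle Sep x y = (x - 1) ^ 2"
    unfolding e by (simp_all add: sum_Pow_insert tri_pats' weight_tri ncomp_tri ex_cp power2_eq_square)
qed

lemma inv_tri: "invG triangle"
proof -
  have f: "ncomp triangle {..<length (edges triangle)} = 1" unfolding tri_verts lt3 by (rule ncomp_tri_full)
  have h: "\<forall>A\<in>Pow {..<length (edges triangle)}. card (verts triangle) \<le> card A + ncomp triangle A"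
    unfolding tri_verts lt3 by (simp add: ball_Pow_insert tri_pats' ncomp_tri ex_cp)
  then have h': "\<forall>A\<subseteq>{..<length (edges triangle)}. card (verts triangle) \<le> card A + ncomp triangle A"
    by blast
  show ?thesis unfolding invG_def using h' f good_triangle by blast
qed


lemma inv_Gamma: "n \<ge> 1 \<Longrightarrow> invG (Gamma n)"
proof (induct n)
  case 0 then show ?case by simp
next
  case (Suc n)
  show ?case
  proof (cases "n = 0")
    case True then show ?thesis using inv_tri by simp
  next
    case False
    then have "invG (Gamma n)" using Suc by simp
    then show ?thesis using Gamma_Suc[of n] False inv_glue by simp
  qed
qed

lemma ncomp_ge2:
  assumes g: "good G" and p: "pat G A \<noteq> All"
  shows "2 \<le> ncomp G A"
proof -
  from p have "\<exists>u\<in>verts G. \<exists>v\<in>verts G. \<not> conn G A u v"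
    using g unfolding pat_def good_def by (auto split: if_splits)
  then obtain u v where uv: "u \<in> verts G" "v \<in> verts G" "\<not> conn G A u v" by blast
  let ?c = "clsR (verts G) (adj G A)"
  have ne: "?c u \<noteq> ?c v" using clsR_eq_iff[OF adj_sub[OF g] adj_sym uv(1,2)] uv(3) unfolding conn_def by simp
  have fin: "finite (?c ` verts G)" using g unfolding good_def by auto
  have "card {?c u, ?c v} \<le> card (?c ` verts G)" by (rule card_mono[OF fin]) (use uv in auto)
  then show ?thesis unfolding ncomp_eq using ne by simp
qed

lemma Psum_x1:
  assumes inv: "invG G" and q: "q \<noteq> All"
  shows "Psum G q 1 y = 0"
proof -
  have g: "good G" using inv unfolding invG_def by auto
  have "weight G A 1 y = 0" if "A \<in> {A \<in> Pow {..<length (edges G)}. pat G A = q}" for A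
  proof -
    have A: "A \<subseteq> {..<length (edges G)}" "pat G A \<noteq> All" using that q by auto
    have "2 \<le> ncomp G A" by (rule ncomp_ge2[OF g A(2)])
    then show ?thesis unfolding weight_formula[OF inv A(1)] by simp
  qed
  then show ?thesis unfolding Psum_def by simp
qed

lemma sym_Gamma:
  assumes n: "n \<ge> 1"
  shows "Psum (Gamma n) TL x y = Psum (Gamma n) LR x y \<and> Psum (Gamma n) TR x y = Psum (Gamma n) LR x y"
proof (cases "x = 1")
  case True
  then show ?thesis using Psum_x1[OF inv_Gamma[OF n]] by simp
next
  case x: False
  show ?thesis using n
  proof (induct n)
    case 0 then show ?case by simp
  next
    case (Suc n)
    show ?case
    proof (cases "n = 0")
      case True then show ?thesis using tri_Psum by simp
    next
      case False
      then have n1: "n \<ge> 1" by simp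
      have ih: "Psum (Gamma n) TL x y = Psum (Gamma n) LR x y" "Psum (Gamma n) TR x y = Psum (Gamma n) LR x y"
        using Suc n1 by auto
      have gs: "Gamma (Suc n) = glue (Gamma n)" by (rule Gamma_Suc[OF n1])
      show ?thesis unfolding gs Psum_glue_RS[OF inv_Gamma[OF n1] x]
        using RS_TL[of "\<lambda>p. Psum (Gamma n) p x y"] RS_TR[of "\<lambda>p. Psum (Gamma n) p x y"]
          RS_LR[of "\<lambda>p. Psum (Gamma n) p x y"] ih by simp
    qed
  qed
qed

lemma T2_Psum: "T2 n x y = Psum (Gamma n) All x y"
  unfolding T2_def Let_def spanning_def Psum_def
  by (rule sum.cong) (auto simp: pat_def split: if_splits)

lemma T1_Psum: "T1 n x y = Psum (Gamma n) LR x y"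
  unfolding T1_def Let_def spanning_def Psum_def
  by (rule sum.cong) (auto simp: pat_def split: if_splits)

lemma T0_Psum: "T0 n x y = Psum (Gamma n) Sep x y"
  unfolding T0_def Let_def spanning_def Psum_def
  by (rule sum.cong) (auto simp: pat_def split: if_splits)

lemma Tn_Psum: "Tn n x y = Psum (Gamma n) All x y + Psum (Gamma n) LR x y + Psum (Gamma n) TL x y
   + Psum (Gamma n) TR x y + Psum (Gamma n) Sep x y"
proof -
  have "Tn n x y = (\<Sum>B\<in>Pow {..<length (edges (Gamma n))}. (\<lambda>p. 1) (pat (Gamma n) B) * weight (Gamma n) B x y)"
    unfolding Tn_def tutte_def spanning_def by simp
  also have "\<dots> = (\<Sum>p\<in>UNIV. 1 * Psum (Gamma n) p x y)" by (rule grp)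
  finally show ?thesis unfolding UNIV_pat by simp
qed

theorem theorem3p1:
  fixes x y :: real
  shows "(\<forall>n\<ge>1. Tn n x y = T2 n x y + 3 * T1 n x y + T0 n x y)
    \<and> T2 1 x y = y + 2 \<and> T1 1 x y = x - 1 \<and> T0 1 x y = (x - 1) ^ 2
    \<and> (x \<noteq> 1 \<longrightarrow> (\<forall>n\<ge>1.
        T2 (n+1) x y = (y - 1) * T2 n x y ^ 3
          + (1 / (x - 1)) * (6 * T2 n x y ^ 2 * T1 n x y + 3 * T2 n x y * T1 n x y ^ 2)
      \<and> T1 (n+1) x y = (y - 1) * T2 n x y ^ 2 * T1 n x y
          + (1 / (x - 1)) * (T2 n x y ^ 2 * T0 n x y + 7 * T2 n x y * T1 n x y ^ 2
             + 2 * T2 n x y * T1 n x y * T0 n x y + 4 * T1 n x y ^ 3 + T1 n x y ^ 2 * T0 n x y)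
      \<and> T0 (n+1) x y = (y - 1) * (3 * T2 n x y * T1 n x y ^ 2 + T1 n x y ^ 3)
          + (1 / (x - 1)) * (12 * T2 n x y * T1 n x y * T0 n x y + 3 * T2 n x y * T0 n x y ^ 2
             + 14 * T1 n x y ^ 3 + 24 * T1 n x y ^ 2 * T0 n x y + 9 * T1 n x y * T0 n x y ^ 2
             + T0 n x y ^ 3)))"
proof (intro conjI allI impI)
  fix n :: nat assume n: "n \<ge> 1"
  show "Tn n x y = T2 n x y + 3 * T1 n x y + T0 n x y"
    unfolding Tn_Psum T2_Psum T1_Psum T0_Psum using sym_Gamma[OF n, of x y] by simp
next
  have g1: "Gamma 1 = triangle" by simp
  show "T2 1 x y = y + 2" "T1 1 x y = x - 1" "T0 1 x y = (x - 1) ^ 2"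
    unfolding T2_Psum T1_Psum T0_Psum g1 tri_Psum by simp_all
next
  fix n :: nat assume x: "x \<noteq> 1" and n: "n \<ge> 1"
  have gs: "Gamma (n + 1) = glue (Gamma n)" using Gamma_Suc[OF n] by simp
  have s: "Psum (Gamma n) TL x y = Psum (Gamma n) LR x y" "Psum (Gamma n) TR x y = Psum (Gamma n) LR x y"
    using sym_Gamma[OF n, of x y] by auto
  note R = Psum_glue_RS[OF inv_Gamma[OF n] x]
  show "T2 (n+1) x y = (y - 1) * T2 n x y ^ 3
          + (1 / (x - 1)) * (6 * T2 n x y ^ 2 * T1 n x y + 3 * T2 n x y * T1 n x y ^ 2)"
    unfolding T2_Psum T1_Psum T0_Psum gs R using RS_All[of "\<lambda>p. Psum (Gamma n) p x y", OF s] by simp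
  show "T1 (n+1) x y = (y - 1) * T2 n x y ^ 2 * T1 n x y
          + (1 / (x - 1)) * (T2 n x y ^ 2 * T0 n x y + 7 * T2 n x y * T1 n x y ^ 2
             + 2 * T2 n x y * T1 n x y * T0 n x y + 4 * T1 n x y ^ 3 + T1 n x y ^ 2 * T0 n x y)"
    unfolding T2_Psum T1_Psum T0_Psum gs R using RS_LR[of "\<lambda>p. Psum (Gamma n) p x y", OF s] by simp
  show "T0 (n+1) x y = (y - 1) * (3 * T2 n x y * T1 n x y ^ 2 + T1 n x y ^ 3)
          + (1 / (x - 1)) * (12 * T2 n x y * T1 n x y * T0 n x y + 3 * T2 n x y * T0 n x y ^ 2
             + 14 * T1 n x y ^ 3 + 24 * T1 n x y ^ 2 * T0 n x y + 9 * T1 n x y * T0 n x y ^ 2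
             + T0 n x y ^ 3)"
    unfolding T2_Psum T1_Psum T0_Psum gs R using RS_Sep[of "\<lambda>p. Psum (Gamma n) p x y", OF s] by simp
qed


end
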